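(* Let $(p,q)$ be a piecewise elementary pair of partial isomorphisms of $\mathbb{Q}$ and suppose the triple $(p',q',w)$ liberates $p$ in $(p,q)$. Let $u$ be a reduced word that is either empty or of the form $u=t^nv$ ($n\neq0$, product reduced) such that $uw$ is reduced (no cancellation). Then there are partial isomorphisms $p''\supseteq p'$ and $q''\supseteq q'$ such that $(p'',q'',uw)$ liberates $p$ in $(p,q)$. The same holds with $p$ and $q$ interchanged: if $(p',q',w)$ liberates $q$ in $(p,q)$ and $u$ is empty or $u=s^mv$ ($m\ne0$) with $uw$ reduced, then there are $p''\supseteq p'$, $q''\supseteq q'$ with $(p'',q'',uw)$ liberating $q$ in $(p,q)$.
   Context: A partial isomorphism of $\mathbb{Q}$ is an order-preserving bijection $p$ between finite subsets $\mathrm{dom}(p),\mathrm{ran}(p)$ of $\mathbb{Q}$; $p'\supseteq p$ means $p'$ extends $p$; $p|_I$ is the restriction of $p$ to $I\cap\mathrm{dom}(p)$; $\mathrm{Fix}(p)=\{c\in\mathrm{dom}(p):p(c)=c\}$. An open interval $(a,b)$ is $p$-increasing if $a,b\in\mathrm{dom}(p)$, $p(a)=a$, $p(b)=b$ and $p(c)>c$ for all $c\in\mathrm{dom}(p)\cap(a,b)$; $p$-decreasing likewise with $p(c)<c$; $p$-monotone means either. Writing $\mathrm{dom}(p)=\{a_0<\dots<a_n\}$, $p$ is informative if $p(a_0)=a_0$, $p(a_n)=a_n$ and there are indices $0=i_0<\dots<i_r=n$ with $p(a_{i_k})=a_{i_k}$ and each $(a_{i_k},a_{i_{k+1}})$ $p$-monotone;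 then $\mathrm{Ess}(p)=(\mathrm{dom}(p)\cup\mathrm{ran}(p))\setminus\{a_0,a_n\}$. A pair $(p,q)$ is piecewise elementary if $p,q$ are informative, $\min\mathrm{dom}(p)=\min\mathrm{dom}(q)$ and $\max\mathrm{dom}(p)=\max\mathrm{dom}(q)$; it is elementary if moreover $\mathrm{Fix}(p)\cap\mathrm{Fix}(q)$ consists only of this min and max. Words: $F(s,t)$ free group; for reduced $w=t^{n_k}s^{m_k}\cdots t^{n_1}s^{m_1}$, $w(p,q)(c)=q^{n_k}p^{m_k}\cdots q^{n_1}p^{m_1}(c)$ when defined (rightmost letter acts first); "$w=t^nv$" means the product is reduced. Liberation for elementary pairs: a triple $(p',q',w)$ with $p'\supseteq p$, $q'\supseteq q$ partial isomorphisms and $w$ reduced liberates $p$ in $(p,q)$ if: (i) $p',q'$ are informative; (ii) $\min\mathrm{dom}(p')=\min\mathrm{dom}(p)$, $\min\mathrm{dom}(q')=\min\mathrm{dom}(q)$, $\max\mathrm{dom}(p')=\max\mathrm{dom}(p)$, $\max\mathrm{dom}(q')=\max\mathrm{dom}(q)$; (iii) $w=t^nv$ with $n\neq0$; (iv) $w(p',q')(c)$ is defined for all $c\in\mathrm{Ess}(p)\cup\mathrm{Ess}(q)$ and $w(p',q')(\min(\mathrm{Ess}(p)\cup\mathrm{Ess}(q)))>\max\mathrm{Ess}(p')$; (v) there is an open interval $J$ whose right endpoint is $\max\mathrm{dom}(q)$, with $w(p',q')(c)\in J$ for all $c\in\mathrm{Ess}(p)\cup\mathrm{Ess}(q)$,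 and $J$ is $q'$-increasing if $n>0$ and $q'$-decreasing if $n<0$. It liberates $q$ if the same holds with roles of $p,q$ and of $s,t$ interchanged. Liberation for piecewise elementary pairs: let $a_0<\dots<a_m$ enumerate $\mathrm{Fix}(p)\cap\mathrm{Fix}(q)$ and $I_j=[a_j,a_{j+1}]$ (so each $(p|_{I_j},q|_{I_j})$ is elementary); $(p',q',w)$ liberates $p$ [resp. $q$] in $(p,q)$ if the min/max conditions (ii) hold and for every $j<m$ the triple $(p'|_{I_j},q'|_{I_j},w)$ liberates $p|_{I_j}$ [resp. $q|_{I_j}$] in $(p|_{I_j},q|_{I_j})$. *)

theory Defs
  imports Complex_Main
begin

definition pisom :: "(rat \<rightharpoonup> rat) \<Rightarrow> bool" where
  "pisom p \<longleftrightarrow> finite (dom p) \<and>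
     (\<forall>a\<in>dom p. \<forall>b\<in>dom p. a < b \<longrightarrow> the (p a) < the (p b))"

definition Fixp :: "(rat \<rightharpoonup> rat) \<Rightarrow> rat set" where
  "Fixp p = {c \<in> dom p. p c = Some c}"

definition p_increasing :: "(rat \<rightharpoonup> rat) \<Rightarrow> rat \<Rightarrow> rat \<Rightarrow> bool" where
  "p_increasing p a b \<longleftrightarrow> a < b \<and> a \<in> dom p \<and> b \<in> dom p \<and> p a = Some a \<and> p b = Some b \<and>
     (\<forall>c\<in>dom p. a < c \<and> c < b \<longrightarrow> the (p c) > c)"

definition p_decreasing :: "(rat \<rightharpoonup> rat) \<Rightarrow> rat \<Rightarrow> rat \<Rightarrow> bool" where
  "p_decreasing p a b \<longleftrightarrow> a < b \<and> a \<in> dom p \<and> b \<in> dom p \<and> p a = Some a \<and> p b = Some b \<and>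
     (\<forall>c\<in>dom p. a < c \<and> c < b \<longrightarrow> the (p c) < c)"

definition p_monotone :: "(rat \<rightharpoonup> rat) \<Rightarrow> rat \<Rightarrow> rat \<Rightarrow> bool" where
  "p_monotone p a b \<longleftrightarrow> p_increasing p a b \<or> p_decreasing p a b"

text \<open>Informative: the chosen indices i_0 < ... < i_r are represented by the strictly
  increasing list of the corresponding domain points a_{i_0} < ... < a_{i_r}.\<close>
definition informative :: "(rat \<rightharpoonup> rat) \<Rightarrow> bool" where
  "informative p \<longleftrightarrow> dom p \<noteq> {} \<and>
     p (Min (dom p)) = Some (Min (dom p)) \<and> p (Max (dom p)) = Some (Max (dom p)) \<and>
     (\<exists>xs. xs \<noteq> [] \<and> sorted_wrt (<) xs \<and> set xs \<subseteq> dom p \<and>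
        hd xs = Min (dom p) \<and> last xs = Max (dom p) \<and>
        (\<forall>x\<in>set xs. p x = Some x) \<and>
        (\<forall>i. Suc i < length xs \<longrightarrow> p_monotone p (xs ! i) (xs ! Suc i)))"

definition Ess :: "(rat \<rightharpoonup> rat) \<Rightarrow> rat set" where
  "Ess p = (dom p \<union> ran p) - {Min (dom p), Max (dom p)}"

definition piecewise_elementary :: "(rat \<rightharpoonup> rat) \<Rightarrow> (rat \<rightharpoonup> rat) \<Rightarrow> bool" where
  "piecewise_elementary p q \<longleftrightarrow> informative p \<and> informative q \<and>
     Min (dom p) = Min (dom q) \<and> Max (dom p) = Max (dom q)"

definition elementary :: "(rat \<rightharpoonup> rat) \<Rightarrow> (rat \<rightharpoonup> rat) \<Rightarrow> bool" where
  "elementary p q \<longleftrightarrow> piecewise_elementary p q \<and>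
     Fixp p \<inter> Fixp q = {Min (dom p), Max (dom p)}"

datatype gen = Gs | Gt

text \<open>A word is a list of letters (generator, positive?), read left to right;
  (Gs, True) = s, (Gs, False) = s^-1, (Gt, True) = t, (Gt, False) = t^-1.\<close>
type_synonym word = "(gen \<times> bool) list"

definition reduced :: "word \<Rightarrow> bool" where
  "reduced w \<longleftrightarrow> (\<forall>i. Suc i < length w \<longrightarrow>
      \<not> (fst (w ! i) = fst (w ! Suc i) \<and> snd (w ! i) \<noteq> snd (w ! Suc i)))"

definition pinv :: "(rat \<rightharpoonup> rat) \<Rightarrow> (rat \<rightharpoonup> rat)" where
  "pinv p y = (if \<exists>x. p x = Some y then Some (THE x. p x = Some y) else None)"

fun letter_act :: "(rat \<rightharpoonup> rat) \<Rightarrow> (rat \<rightharpoonup> rat) \<Rightarrow> gen \<times> bool \<Rightarrow> (rat \<rightharpoonup> rat)" where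
  "letter_act p q (Gs, True) = p"
| "letter_act p q (Gs, False) = pinv p"
| "letter_act p q (Gt, True) = q"
| "letter_act p q (Gt, False) = pinv q"

text \<open>w(p,q)(c); the rightmost letter acts first; None = undefined.\<close>
primrec wev :: "(rat \<rightharpoonup> rat) \<Rightarrow> (rat \<rightharpoonup> rat) \<Rightarrow> word \<Rightarrow> rat \<Rightarrow> rat option" where
  "wev p q [] c = Some c"
| "wev p q (l # w) c = Option.bind (wev p q w c) (letter_act p q l)"

definition liberates_p_el ::
  "(rat \<rightharpoonup> rat) \<Rightarrow> (rat \<rightharpoonup> rat) \<Rightarrow> (rat \<rightharpoonup> rat) \<Rightarrow> (rat \<rightharpoonup> rat) \<Rightarrow> word \<Rightarrow> bool" where
  "liberates_p_el p q p' q' w \<longleftrightarrow>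
     pisom p' \<and> pisom q' \<and> p \<subseteq>\<^sub>m p' \<and> q \<subseteq>\<^sub>m q' \<and> reduced w \<and>
     informative p' \<and> informative q' \<and>
     Min (dom p') = Min (dom p) \<and> Min (dom q') = Min (dom q) \<and>
     Max (dom p') = Max (dom p) \<and> Max (dom q') = Max (dom q) \<and>
     w \<noteq> [] \<and> fst (hd w) = Gt \<and>
     (\<forall>c\<in>Ess p \<union> Ess q. wev p' q' w c \<noteq> None) \<and>
     (Ess p \<union> Ess q \<noteq> {} \<longrightarrow>
        (\<forall>x\<in>Ess p'. the (wev p' q' w (Min (Ess p \<union> Ess q))) > x)) \<and>
     (\<exists>a. (\<forall>c\<in>Ess p \<union> Ess q. a < the (wev p' q' w c) \<and> the (wev p' q' w c) < Max (dom q)) \<and>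
          (if snd (hd w) then p_increasing q' a (Max (dom q))
           else p_decreasing q' a (Max (dom q))))"

definition liberates_q_el ::
  "(rat \<rightharpoonup> rat) \<Rightarrow> (rat \<rightharpoonup> rat) \<Rightarrow> (rat \<rightharpoonup> rat) \<Rightarrow> (rat \<rightharpoonup> rat) \<Rightarrow> word \<Rightarrow> bool" where
  "liberates_q_el p q p' q' w \<longleftrightarrow>
     pisom p' \<and> pisom q' \<and> p \<subseteq>\<^sub>m p' \<and> q \<subseteq>\<^sub>m q' \<and> reduced w \<and>
     informative p' \<and> informative q' \<and>
     Min (dom p') = Min (dom p) \<and> Min (dom q') = Min (dom q) \<and>
     Max (dom p') = Max (dom p) \<and> Max (dom q') = Max (dom q) \<and>
     w \<noteq> [] \<and> fst (hd w) = Gs \<and>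
     (\<forall>c\<in>Ess p \<union> Ess q. wev p' q' w c \<noteq> None) \<and>
     (Ess p \<union> Ess q \<noteq> {} \<longrightarrow>
        (\<forall>x\<in>Ess q'. the (wev p' q' w (Min (Ess p \<union> Ess q))) > x)) \<and>
     (\<exists>a. (\<forall>c\<in>Ess p \<union> Ess q. a < the (wev p' q' w c) \<and> the (wev p' q' w c) < Max (dom p)) \<and>
          (if snd (hd w) then p_increasing p' a (Max (dom p))
           else p_decreasing p' a (Max (dom p))))"

definition liberates_p ::
  "(rat \<rightharpoonup> rat) \<Rightarrow> (rat \<rightharpoonup> rat) \<Rightarrow> (rat \<rightharpoonup> rat) \<Rightarrow> (rat \<rightharpoonup> rat) \<Rightarrow> word \<Rightarrow> bool" where
  "liberates_p p q p' q' w \<longleftrightarrow>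
     pisom p' \<and> pisom q' \<and> p \<subseteq>\<^sub>m p' \<and> q \<subseteq>\<^sub>m q' \<and> reduced w \<and>
     Min (dom p') = Min (dom p) \<and> Min (dom q') = Min (dom q) \<and>
     Max (dom p') = Max (dom p) \<and> Max (dom q') = Max (dom q) \<and>
     (\<forall>a b. a \<in> Fixp p \<inter> Fixp q \<and> b \<in> Fixp p \<inter> Fixp q \<and> a < b \<and>
            (\<forall>c\<in>Fixp p \<inter> Fixp q. \<not> (a < c \<and> c < b)) \<longrightarrow>
        liberates_p_el (p |` {a..b}) (q |` {a..b}) (p' |` {a..b}) (q' |` {a..b}) w)"

definition liberates_q ::
  "(rat \<rightharpoonup> rat) \<Rightarrow> (rat \<rightharpoonup> rat) \<Rightarrow> (rat \<rightharpoonup> rat) \<Rightarrow> (rat \<rightharpoonup> rat) \<Rightarrow> word \<Rightarrow> bool" where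
  "liberates_q p q p' q' w \<longleftrightarrow>
     pisom p' \<and> pisom q' \<and> p \<subseteq>\<^sub>m p' \<and> q \<subseteq>\<^sub>m q' \<and> reduced w \<and>
     Min (dom p') = Min (dom p) \<and> Min (dom q') = Min (dom q) \<and>
     Max (dom p') = Max (dom p) \<and> Max (dom q') = Max (dom q) \<and>
     (\<forall>a b. a \<in> Fixp p \<inter> Fixp q \<and> b \<in> Fixp p \<inter> Fixp q \<and> a < b \<and>
            (\<forall>c\<in>Fixp p \<inter> Fixp q. \<not> (a < c \<and> c < b)) \<longrightarrow>
        liberates_q_el (p |` {a..b}) (q |` {a..b}) (p' |` {a..b}) (q' |` {a..b}) w)"

end

theory Submission
  imports Defs
begin


definition pts :: "(rat \<rightharpoonup> rat) \<Rightarrow> rat set" where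
  "pts M = dom M \<union> ran M"

definition SC :: "(rat \<rightharpoonup> rat) \<Rightarrow> bool" where
  "SC M \<longleftrightarrow> (\<forall>y\<in>dom M. \<forall>z\<in>dom M. y < z \<longrightarrow>
      ((the (M y) > y \<and> the (M z) < z) \<or> (the (M y) < y \<and> the (M z) > z)) \<longrightarrow>
      (\<exists>c\<in>Fixp M. y < c \<and> c < z))"

definition okm :: "rat \<Rightarrow> rat \<Rightarrow> (rat \<rightharpoonup> rat) \<Rightarrow> bool" where
  "okm a b M \<longleftrightarrow> a < b \<and> pisom M \<and> SC M \<and> dom M \<subseteq> {a..b} \<and> M a = Some a \<and> M b = Some b"

lemma pisom_less:
  assumes "pisom M" "M x = Some u" "M y = Some v" "x < y" shows "u < v"
  using assms unfolding pisom_def by (metis domI option.sel)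

lemma pisom_less_iff:
  assumes "pisom M" "M x = Some u" "M y = Some v" shows "u < v \<longleftrightarrow> x < y"
  using pisom_less[OF assms(1,2,3)] pisom_less[OF assms(1,3,2)]
  by (metis less_asym' linorder_neqE_linordered_idom option.inject assms(2,3))

lemma pisom_le_iff:
  assumes "pisom M" "M x = Some u" "M y = Some v" shows "u \<le> v \<longleftrightarrow> x \<le> y"
  using pisom_less_iff[OF assms(1,3,2)] by auto

lemma pisom_inj:
  assumes "pisom M" "M x = Some u" "M y = Some u" shows "x = y"
  using pisom_less_iff[OF assms(1,2,3)] pisom_less_iff[OF assms(1,3,2)] by auto

lemma pinv_Some:
  assumes "pisom M" shows "pinv M y = Some x \<longleftrightarrow> M x = Some y"
proof
  assume "pinv M y = Some x"
  then have ex: "\<exists>x. M x = Some y" and "x = (THE x. M x = Some y)"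
    unfolding pinv_def by (auto split: if_splits)
  then show "M x = Some y"
    using theI'[of "\<lambda>x. M x = Some y"] pisom_inj[OF assms] by blast
next
  assume h: "M x = Some y"
  have "(THE x. M x = Some y) = x"
    using h pisom_inj[OF assms] by blast
  then show "pinv M y = Some x" unfolding pinv_def using h by auto
qed

lemma pinv_None: "pinv M y = None \<longleftrightarrow> y \<notin> ran M"
  unfolding pinv_def ran_def by auto

lemma pisom_fix_side:
  assumes "pisom M" "M a = Some a" "M x = Some y"
  shows "x < a \<longleftrightarrow> y < a" "a < x \<longleftrightarrow> a < y" "x = a \<longleftrightarrow> y = a"
  using pisom_less_iff[OF assms(1,3,2)] pisom_less_iff[OF assms(1,2,3)] pisom_inj[OF assms(1)] assms
  by auto

lemma okm_ran:
  assumes "okm a b M" "M x = Some y" shows "a \<le> y \<and> y \<le> b \<and> a \<le> x \<and> x \<le> b"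
proof -
  have "x \<in> {a..b}" using assms unfolding okm_def by auto
  then show ?thesis using assms pisom_le_iff[of M a a x y] pisom_le_iff[of M x y b b]
    unfolding okm_def by auto
qed

lemma okm_pts: "okm a b M \<Longrightarrow> pts M \<subseteq> {a..b}"
  unfolding pts_def ran_def using okm_ran by fastforce

lemma okm_open:
  assumes "okm a b M" "M x = Some y" shows "(a < x \<and> x < b) \<longleftrightarrow> (a < y \<and> y < b)"
  using assms pisom_fix_side[of M a x y] pisom_fix_side[of M b x y] unfolding okm_def by auto

lemma okm_Min: "okm a b M \<Longrightarrow> Min (dom M) = a"
  unfolding okm_def pisom_def by (intro Min_eqI) auto

lemma okm_Max: "okm a b M \<Longrightarrow> Max (dom M) = b"
  unfolding okm_def pisom_def by (intro Max_eqI) auto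

lemma okm_Ess: "okm a b M \<Longrightarrow> Ess M = pts M \<inter> {a<..<b}"
  using okm_pts[of a b M] okm_Min[of a b M] okm_Max[of a b M]
  unfolding Ess_def pts_def by auto


lemma sw_hd_le:
  assumes "sorted_wrt (<) (xs::rat list)" "x \<in> set xs" shows "hd xs \<le> x"
proof -
  obtain j where j: "j < length xs" "x = xs ! j" using assms(2) by (auto simp: in_set_conv_nth)
  have "xs \<noteq> []" using assms by auto
  then have "hd xs = xs ! 0" by (simp add: hd_conv_nth)
  then show ?thesis using j sorted_wrt_nth_less[OF assms(1), of 0 j]
    by (cases j) auto
qed

lemma sw_last_ge:
  assumes "sorted_wrt (<) (xs::rat list)" "x \<in> set xs" shows "x \<le> last xs"
proof -
  obtain j where j: "j < length xs" "x = xs ! j" using assms(2) by (auto simp: in_set_conv_nth)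
  have "xs \<noteq> []" using assms by auto
  then have "last xs = xs ! (length xs - 1)" by (simp add: last_conv_nth)
  have "j = length xs - 1 \<or> j < length xs - 1" using j by linarith
  then show ?thesis using j sorted_wrt_nth_less[OF assms(1), of j "length xs - 1"] \<open>last xs = _\<close>
    by (metis diff_less less_imp_le less_numeral_extra(1) order_refl j(1) gr_implies_not0 linorder_neqE_nat)
qed

lemma sw_between:
  assumes "sorted_wrt (<) (xs::rat list)" "Suc i < length xs" "z \<in> set xs" "xs ! i < z"
  shows "xs ! Suc i \<le> z"
proof -
  obtain j where j: "j < length xs" "z = xs ! j" using assms(3) by (auto simp: in_set_conv_nth)
  have "\<not> j \<le> i"
  proof
    assume "j \<le> i"
    then have "xs ! j \<le> xs ! i" using sorted_wrt_nth_less[OF assms(1), of j i] assms(2)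
      by (cases "j = i") auto
    then show False using j assms(4) by auto
  qed
  then show ?thesis using j sorted_wrt_nth_less[OF assms(1), of "Suc i" j]
    by (cases "j = Suc i") auto
qed

lemma sw_locate:
  assumes "sorted_wrt (<) (xs::rat list)" "xs \<noteq> []" "hd xs < y" "y < last xs"
  shows "\<exists>i. Suc i < length xs \<and> xs ! i < y \<and> y \<le> xs ! Suc i"
  using assms
proof (induction xs)
  case Nil then show ?case by simp
next
  case (Cons x xs)
  show ?case
  proof (cases "xs = []")
    case True then show ?thesis using Cons by simp
  next
    case False
    show ?thesis
    proof (cases "y \<le> hd xs")
      case True
      then show ?thesis using Cons False by (intro exI[of _ 0]) (auto simp: hd_conv_nth)
    next
      case nt: False
      then have "\<exists>i. Suc i < length xs \<and> xs ! i < y \<and> y \<le> xs ! Suc i"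
        using Cons False by (intro Cons.IH) auto
      then obtain i where "Suc i < length xs \<and> xs ! i < y \<and> y \<le> xs ! Suc i" by blast
      then show ?thesis by (intro exI[of _ "Suc i"]) auto
    qed
  qed
qed

lemma fix_of_list:
  assumes "\<forall>x\<in>set xs. M x = Some x" "x \<in> set xs" shows "x \<in> Fixp M"
  using assms unfolding Fixp_def by auto

lemma inf_SC:
  assumes "pisom M" "informative M" shows "SC M"
  unfolding SC_def
proof (intro ballI impI)
  fix y z assume yd: "y \<in> dom M" and zd: "z \<in> dom M" and yz: "y < z"
    and sg: "y < the (M y) \<and> the (M z) < z \<or> the (M y) < y \<and> z < the (M z)"
  obtain xs where xs: "xs \<noteq> []" "sorted_wrt (<) xs" "set xs \<subseteq> dom M"
      "hd xs = Min (dom M)" "last xs = Max (dom M)" "\<forall>x\<in>set xs. M x = Some x"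
      "\<forall>i. Suc i < length xs \<longrightarrow> p_monotone M (xs ! i) (xs ! Suc i)"
    using assms(2) unfolding informative_def by blast
  have fin: "finite (dom M)" using assms(1) unfolding pisom_def by auto
  have ynf: "M y \<noteq> Some y" using sg by auto
  have znf: "M z \<noteq> Some z" using sg by auto
  have "y \<notin> set xs" using xs(6) ynf by auto
  have "z \<notin> set xs" using xs(6) znf by auto
  have "hd xs \<in> set xs" "last xs \<in> set xs" using xs(1) by auto
  have "Min (dom M) \<le> y" using fin yd by auto
  then have h1: "hd xs < y" using xs(4) \<open>hd xs \<in> set xs\<close> \<open>y \<notin> set xs\<close>
    by (metis order_le_less)
  have "z \<le> Max (dom M)" using fin zd by auto
  then have h2: "z < last xs" using xs(5) \<open>last xs \<in> set xs\<close> \<open>z \<notin> set xs\<close>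
    by (metis order_le_less)
  obtain i where i: "Suc i < length xs" "xs ! i < y" "y \<le> xs ! Suc i"
    using sw_locate[OF xs(2) xs(1) h1] h2 yz by force
  have "xs ! Suc i \<in> set xs" using i(1) by auto
  then have yl: "y < xs ! Suc i" using i(3) \<open>y \<notin> set xs\<close> by (metis order_le_less)
  show "\<exists>c\<in>Fixp M. y < c \<and> c < z"
  proof (cases "z < xs ! Suc i")
    case True
    have pm: "p_monotone M (xs ! i) (xs ! Suc i)" using xs(7) i(1) by auto
    have zl: "xs ! i < z" using i(2) yz by auto
    have "(y < the (M y) \<and> z < the (M z)) \<or> (the (M y) < y \<and> the (M z) < z)"
      using pm yd zd i(2) yl zl True unfolding p_monotone_def p_increasing_def p_decreasing_def
      by blast
    then show ?thesis using sg by auto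
  next
    case False
    then have "xs ! Suc i < z" using \<open>z \<notin> set xs\<close> \<open>xs ! Suc i \<in> set xs\<close>
      by (metis linorder_neqE_linordered_idom)
    then show ?thesis using yl fix_of_list[OF xs(6) \<open>xs ! Suc i \<in> set xs\<close>] by blast
  qed
qed

lemma SC_inf:
  assumes "pisom M" "dom M \<noteq> {}" "M (Min (dom M)) = Some (Min (dom M))"
    "M (Max (dom M)) = Some (Max (dom M))" "SC M"
  shows "informative M"
proof -
  have fin: "finite (dom M)" using assms(1) unfolding pisom_def by auto
  have ffin: "finite (Fixp M)" using fin unfolding Fixp_def by auto
  obtain xs where xs: "sorted_wrt (<) xs" "set xs = Fixp M"
    using ex1_sorted_list_for_set_if_finite[OF ffin] by blast
  have minF: "Min (dom M) \<in> Fixp M" using assms(2,3) fin unfolding Fixp_def by auto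
  have maxF: "Max (dom M) \<in> Fixp M" using assms(2,4) fin unfolding Fixp_def by auto
  have FD: "Fixp M \<subseteq> dom M" unfolding Fixp_def by auto
  have ne: "xs \<noteq> []" using xs(2) minF by auto
  have "hd xs \<in> dom M" using ne xs(2) FD by (metis hd_in_set subsetD)
  then have "hd xs = Min (dom M)"
    using sw_hd_le[OF xs(1), of "Min (dom M)"] minF xs(2) fin by (metis Min_le order_antisym)
  moreover have "last xs \<in> dom M" using ne xs(2) FD by (metis last_in_set subsetD)
  then have "last xs = Max (dom M)"
    using sw_last_ge[OF xs(1), of "Max (dom M)"] maxF xs(2) fin by (metis Max_ge order_antisym)
  moreover have "\<forall>i. Suc i < length xs \<longrightarrow> p_monotone M (xs ! i) (xs ! Suc i)"
  proof (intro allI impI)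
    fix i assume i: "Suc i < length xs"
    let ?l = "xs ! i" and ?r = "xs ! Suc i"
    have lr: "?l < ?r" using sorted_wrt_nth_less[OF xs(1), of i "Suc i"] i by auto
    have lF: "?l \<in> Fixp M" and rF: "?r \<in> Fixp M" using i xs(2) by (auto dest: nth_mem)
    have nofix: "\<And>c. c \<in> Fixp M \<Longrightarrow> ?l < c \<Longrightarrow> c < ?r \<Longrightarrow> False"
      using sw_between[OF xs(1) i] xs(2) by force
    have base: "?l \<in> dom M \<and> ?r \<in> dom M \<and> M ?l = Some ?l \<and> M ?r = Some ?r"
      using lF rF unfolding Fixp_def by auto
    have nf: "\<And>c. c \<in> dom M \<Longrightarrow> ?l < c \<Longrightarrow> c < ?r \<Longrightarrow> the (M c) \<noteq> c"
      using nofix unfolding Fixp_def by force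
    show "p_monotone M ?l ?r"
    proof (cases "\<exists>c0\<in>dom M. ?l < c0 \<and> c0 < ?r \<and> the (M c0) > c0")
      case True
      then obtain c0 where c0: "c0 \<in> dom M" "?l < c0" "c0 < ?r" "the (M c0) > c0" by blast
      have "\<forall>c\<in>dom M. ?l < c \<and> c < ?r \<longrightarrow> the (M c) > c"
      proof (intro ballI impI)
        fix c assume c: "c \<in> dom M" "?l < c \<and> c < ?r"
        show "the (M c) > c"
        proof (rule ccontr)
          assume "\<not> the (M c) > c"
          then have lt: "the (M c) < c" using nf c by force
          consider "c0 < c" | "c < c0" | "c = c0" by fastforce
          then show False
          proof cases
            case 1
            then obtain d where "d \<in> Fixp M" "c0 < d" "d < c"
              using assms(5) c0 c lt unfolding SC_def by blast
            then show False using nofix[of d] c0(2) c(2) by (meson less_trans)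
          next
            case 2
            then obtain d where "d \<in> Fixp M" "c < d" "d < c0"
              using assms(5) c0 c lt unfolding SC_def by blast
            then show False using nofix[of d] c0(3) c(2) by (meson less_trans)
          next
            case 3 then show False using lt c0 by auto
          qed
        qed
      qed
      then show ?thesis unfolding p_monotone_def p_increasing_def using lr base by auto
    next
      case False
      then have "\<forall>c\<in>dom M. ?l < c \<and> c < ?r \<longrightarrow> the (M c) < c"
        using nf by force
      then show ?thesis unfolding p_monotone_def p_decreasing_def using lr base by auto
    qed
  qed
  ultimately show ?thesis unfolding informative_def
    using assms(2,3,4) ne xs FD unfolding Fixp_def by auto
qed

lemma okm_informative: "okm a b M \<Longrightarrow> informative M"
  apply (rule SC_inf)
  using okm_Min[of a b M] okm_Max[of a b M] unfolding okm_def by auto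

lemma informative_okm:
  assumes "pisom M" "informative M" "Min (dom M) = a" "Max (dom M) = b" "a < b"
  shows "okm a b M"
proof -
  have fin: "finite (dom M)" using assms(1) unfolding pisom_def by auto
  have "dom M \<subseteq> {a..b}" using fin assms(3,4) by (metis Max_ge Min_le atLeastAtMost_iff subsetI)
  then show ?thesis unfolding okm_def using inf_SC[OF assms(1,2)] assms fin
    unfolding informative_def by auto
qed


definition pm :: "bool \<Rightarrow> (rat \<rightharpoonup> rat) \<Rightarrow> rat \<Rightarrow> rat \<Rightarrow> bool" where
  "pm \<sigma> M f b = (if \<sigma> then p_increasing M f b else p_decreasing M f b)"

definition gext :: "(rat \<rightharpoonup> rat) \<Rightarrow> 'x set \<Rightarrow> ('x \<Rightarrow> rat) \<Rightarrow> ('x \<Rightarrow> rat) \<Rightarrow> (rat \<rightharpoonup> rat)" where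
  "gext P X \<alpha> \<beta> = (\<lambda>y. if y \<in> \<alpha> ` X then Some (\<beta> (inv_into X \<alpha> y)) else P y)"

lemma gext_alpha: "inj_on \<alpha> X \<Longrightarrow> x \<in> X \<Longrightarrow> gext P X \<alpha> \<beta> (\<alpha> x) = Some (\<beta> x)"
  unfolding gext_def by auto

lemma gext_other: "y \<notin> \<alpha> ` X \<Longrightarrow> gext P X \<alpha> \<beta> y = P y"
  unfolding gext_def by auto

lemma gext_dom: "dom (gext P X \<alpha> \<beta>) = dom P \<union> \<alpha> ` X"
  unfolding gext_def by (auto split: if_splits)

lemma pm_sign:
  assumes "pm \<sigma> M f b" "c \<in> dom M" "f < c" "c < b"
  shows "(if \<sigma> then the (M c) > c else the (M c) < c)"
  using assms unfolding pm_def p_increasing_def p_decreasing_def by (auto split: if_splits)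

lemma pm_basic:
  assumes "pm \<sigma> M f b" shows "f < b" "M f = Some f" "M b = Some b"
  using assms unfolding pm_def p_increasing_def p_decreasing_def by (auto split: if_splits)

lemma strict_mono_inj:
  assumes "\<forall>x\<in>X. \<forall>y\<in>X. x < y \<longrightarrow> \<alpha> x < (\<alpha> y::rat)" shows "inj_on \<alpha> (X::rat set)"
  unfolding inj_on_def
proof (intro ballI impI)
  fix x y assume "x \<in> X" "y \<in> X" "\<alpha> x = \<alpha> y"
  then show "x = y" using assms by (metis linorder_neqE_linordered_idom order_less_irrefl)
qed

lemma map_le_Some: "P \<subseteq>\<^sub>m Q \<Longrightarrow> P x = Some y \<Longrightarrow> Q x = Some y"
  unfolding map_le_def by (metis domI)

lemma fixp_mono: "P \<subseteq>\<^sub>m Q \<Longrightarrow> Fixp P \<subseteq> Fixp Q"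
  unfolding Fixp_def using map_le_Some by fastforce

lemma add_graph:
  fixes X :: "'x set" and \<alpha> \<beta> :: "'x \<Rightarrow> rat"
  assumes ok: "okm a b P" and pmf: "pm \<sigma> P f b" and fa: "a \<le> f"
    and finX: "finite X"
    and anew: "\<forall>x\<in>X. \<alpha> x \<notin> dom P \<and> f < \<alpha> x \<and> \<alpha> x < b"
    and sgn: "\<forall>x\<in>X. (if \<sigma> then \<beta> x > \<alpha> x else \<beta> x < \<alpha> x)"
    and amono: "\<forall>x\<in>X. \<forall>y\<in>X. \<alpha> x < \<alpha> y \<longrightarrow> \<beta> x < \<beta> y"
    and ainj: "inj_on \<alpha> X"
    and compat: "\<forall>d\<in>dom P. \<forall>x\<in>X. (d < \<alpha> x \<longrightarrow> the (P d) < \<beta> x) \<and> (\<alpha> x < d \<longrightarrow> \<beta> x < the (P d))"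
  shows "okm a b (gext P X \<alpha> \<beta>) \<and> pm \<sigma> (gext P X \<alpha> \<beta>) f b \<and> P \<subseteq>\<^sub>m gext P X \<alpha> \<beta>"
proof -
  let ?P = "gext P X \<alpha> \<beta>"
  have sub: "P \<subseteq>\<^sub>m ?P" unfolding map_le_def
  proof (intro ballI)
    fix y assume y: "y \<in> dom P"
    have "y \<notin> \<alpha> ` X" using anew y by auto
    then show "P y = ?P y" by (simp add: gext_other)
  qed
  have okP: "a < b" "pisom P" "SC P" "dom P \<subseteq> {a..b}" "P a = Some a" "P b = Some b"
    using ok unfolding okm_def by auto
  have fb: "f < b" "P f = Some f" using pm_basic[OF pmf] by auto
  have val: "(y \<in> dom P \<and> ?P y = P y \<and> y \<notin> \<alpha> ` X) \<or> (\<exists>x\<in>X. y = \<alpha> x \<and> ?P y = Some (\<beta> x))"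
    if y: "y \<in> dom ?P" for y
  proof (cases "y \<in> \<alpha> ` X")
    case True
    then obtain x where "x \<in> X" "y = \<alpha> x" by blast
    then show ?thesis using gext_alpha[OF ainj] by blast
  next
    case False
    then have "?P y = P y" by (simp add: gext_other)
    moreover have "y \<in> dom P" using y False unfolding gext_dom by auto
    ultimately show ?thesis using False by blast
  qed
  have P_pisom: "pisom ?P"
    unfolding pisom_def
  proof (intro conjI ballI impI)
    show "finite (dom ?P)" using okP(2) finX unfolding gext_dom pisom_def by auto
  next
    fix y z assume y: "y \<in> dom ?P" and z: "z \<in> dom ?P" and yz: "y < z"
    show "the (?P y) < the (?P z)"
      using val[OF y] val[OF z]
    proof (elim disjE bexE conjE)
      assume "y \<in> dom P" "?P y = P y" "z \<in> dom P" "?P z = P z"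
      then show ?thesis using okP(2) yz unfolding pisom_def by auto
    next
      fix x assume "y \<in> dom P" "?P y = P y" "x \<in> X" "z = \<alpha> x" "?P z = Some (\<beta> x)"
      then show ?thesis using compat yz by auto
    next
      fix x assume "x \<in> X" "y = \<alpha> x" "?P y = Some (\<beta> x)" "z \<in> dom P" "?P z = P z"
      then show ?thesis using compat yz by auto
    next
      fix x x' assume "x \<in> X" "y = \<alpha> x" "?P y = Some (\<beta> x)" "x' \<in> X" "z = \<alpha> x'" "?P z = Some (\<beta> x')"
      then show ?thesis using amono yz by auto
    qed
  qed
  have domP': "dom ?P \<subseteq> {a..b}"
  proof
    fix y assume "y \<in> dom ?P"
    then have "y \<in> dom P \<or> y \<in> \<alpha> ` X" unfolding gext_dom by auto
    then show "y \<in> {a..b}"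
    proof
      assume "y \<in> \<alpha> ` X"
      then obtain x where "x \<in> X" "y = \<alpha> x" by blast
      then show ?thesis using anew fa by force
    qed (use okP(4) in auto)
  qed
  have Pa: "?P a = Some a" using map_le_Some[OF sub okP(5)] .
  have Pb: "?P b = Some b" using map_le_Some[OF sub okP(6)] .
  have fixsub: "Fixp P \<subseteq> Fixp ?P" using fixp_mono[OF sub] .
  have Pf: "?P f = Some f" using map_le_Some[OF sub fb(2)] .
  have fF: "f \<in> Fixp ?P" using Pf unfolding Fixp_def by auto
  have newsgn: "\<And>x. x \<in> X \<Longrightarrow> (if \<sigma> then the (?P (\<alpha> x)) > \<alpha> x else the (?P (\<alpha> x)) < \<alpha> x)"
    using sgn gext_alpha[OF ainj] by auto
  have oldsgn: "(if \<sigma> then the (?P d) > d else the (?P d) < d)"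
    if d: "d \<in> dom P" "f < d" "d < b" for d
  proof -
    have "?P d = P d" using sub d(1) unfolding map_le_def by auto
    then show ?thesis using pm_sign[OF pmf d] by simp
  qed
  have P_SC: "SC ?P"
    unfolding SC_def
  proof (intro ballI impI)
    fix y z assume y: "y \<in> dom ?P" and z: "z \<in> dom ?P" and yz: "y < z"
      and sg: "y < the (?P y) \<and> the (?P z) < z \<or> the (?P y) < y \<and> z < the (?P z)"
    have opp: "\<not> ((if \<sigma> then the (?P y) > y else the (?P y) < y) \<and> (if \<sigma> then the (?P z) > z else the (?P z) < z))"
      using sg by (auto split: if_splits)
    have nfy: "the (?P y) \<noteq> y" and nfz: "the (?P z) \<noteq> z" using sg by auto
    show "\<exists>c\<in>Fixp ?P. y < c \<and> c < z"
      using val[OF y] val[OF z]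
    proof (elim disjE bexE conjE)
      assume "y \<in> dom P" "?P y = P y" "z \<in> dom P" "?P z = P z"
      then show ?thesis using okP(3) sg yz fixsub unfolding SC_def by (metis subsetD)
    next
      fix x assume yd: "y \<in> dom P" "?P y = P y" and x: "x \<in> X" "z = \<alpha> x" "?P z = Some (\<beta> x)"
      have "\<not> (f < y)"
      proof
        assume fy: "f < y"
        have "y < b" using yz x anew by auto
        then show False using oldsgn[OF yd(1) fy] newsgn[OF x(1)] opp x(2) yd(2) by auto
      qed
      moreover have "y \<noteq> f" using nfy Pf by auto
      ultimately show ?thesis using fF x anew by (intro bexI[of _ f]) auto
    next
      fix x assume x: "x \<in> X" "y = \<alpha> x" "?P y = Some (\<beta> x)" and zd: "z \<in> dom P" "?P z = P z"
      have "z \<le> b" using zd okP(4) by auto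
      moreover have "z \<noteq> b" using nfz Pb by auto
      moreover have "f < z" using x anew yz by auto
      ultimately show ?thesis using oldsgn[OF zd(1)] newsgn[OF x(1)] opp x(2) by auto
    next
      fix x x' assume "x \<in> X" "y = \<alpha> x" "x' \<in> X" "z = \<alpha> x'"
      then show ?thesis using newsgn opp by auto
    qed
  qed
  have "okm a b ?P" unfolding okm_def using okP(1) P_pisom P_SC domP' Pa Pb by auto
  moreover have "pm \<sigma> ?P f b"
  proof -
    have "\<forall>c\<in>dom ?P. f < c \<and> c < b \<longrightarrow> (if \<sigma> then the (?P c) > c else the (?P c) < c)"
    proof (intro ballI impI)
      fix c assume c: "c \<in> dom ?P" "f < c \<and> c < b"
      show "(if \<sigma> then the (?P c) > c else the (?P c) < c)"
        using val[OF c(1)]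
      proof (elim disjE bexE conjE)
        assume "c \<in> dom P" then show ?thesis using oldsgn c(2) by blast
      next
        fix x assume "x \<in> X" "c = \<alpha> x" then show ?thesis using newsgn by blast
      qed
    qed
    then show ?thesis unfolding pm_def p_increasing_def p_decreasing_def
      using fb Pf Pb by (auto simp: domIff split: if_splits)
  qed
  ultimately show ?thesis using sub by auto
qed


lemma add_fix:
  assumes ok: "okm a b P" and f: "a < f" "f < b" and below: "\<forall>y\<in>pts P. y < f \<or> y = b"
  shows "okm a b (P(f \<mapsto> f)) \<and> pm \<sigma> (P(f \<mapsto> f)) f b \<and> P \<subseteq>\<^sub>m P(f \<mapsto> f)"
proof -
  let ?P = "P(f \<mapsto> f)"
  have okP: "a < b" "pisom P" "SC P" "dom P \<subseteq> {a..b}" "P a = Some a" "P b = Some b"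
    using ok unfolding okm_def by auto
  have fnd: "f \<notin> dom P" using below f unfolding pts_def by auto
  have sub: "P \<subseteq>\<^sub>m ?P" using fnd unfolding map_le_def by auto
  have dv: "(d < f \<and> the (P d) < f) \<or> (d = b \<and> the (P d) = b)" if d: "d \<in> dom P" for d
  proof -
    obtain v where v: "P d = Some v" using d by auto
    have "v \<in> pts P" "d \<in> pts P" using v unfolding pts_def ran_def by auto
    then have "d < f \<or> d = b" "v < f \<or> v = b" using below by auto
    moreover have "v = b \<longrightarrow> d = b" using pisom_inj[OF okP(2) v] okP(6) by auto
    ultimately show ?thesis using v okP(6) by auto
  qed
  have P_pisom: "pisom ?P" unfolding pisom_def
  proof (intro conjI ballI impI)
    show "finite (dom ?P)" using okP(2) unfolding pisom_def by auto
  next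
    fix y z assume y: "y \<in> dom ?P" and z: "z \<in> dom ?P" and yz: "y < z"
    consider "y = f" | "z = f" | "y \<noteq> f" "z \<noteq> f" by blast
    then show "the (?P y) < the (?P z)"
    proof cases
      case 1 then show ?thesis using dv[of z] z yz f by auto
    next
      case 2 then show ?thesis using dv[of y] y yz f by auto
    next
      case 3 then show ?thesis using y z yz okP(2) unfolding pisom_def by auto
    qed
  qed
  have fixsub: "Fixp P \<subseteq> Fixp ?P" using fixp_mono[OF sub] .
  have P_SC: "SC ?P" unfolding SC_def
  proof (intro ballI impI)
    fix y z assume y: "y \<in> dom ?P" and z: "z \<in> dom ?P" and yz: "y < z"
      and sg: "y < the (?P y) \<and> the (?P z) < z \<or> the (?P y) < y \<and> z < the (?P z)"
    have "y \<noteq> f" "z \<noteq> f" using sg by auto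
    then have yd: "y \<in> dom P" and zd: "z \<in> dom P" and e: "the (?P y) = the (P y)" "the (?P z) = the (P z)"
      using y z by auto
    have sgP: "y < the (P y) \<and> the (P z) < z \<or> the (P y) < y \<and> z < the (P z)" using sg e by simp
    obtain c where "c \<in> Fixp P" "y < c" "c < z"
      using okP(3) yd zd yz sgP unfolding SC_def by blast
    then show "\<exists>c\<in>Fixp ?P. y < c \<and> c < z" using fixsub by blast
  qed
  have "okm a b ?P" unfolding okm_def using okP P_pisom P_SC f by auto
  moreover have nod: "\<forall>c\<in>dom ?P. \<not> (f < c \<and> c < b)"
  proof (intro ballI)
    fix c assume "c \<in> dom ?P" show "\<not> (f < c \<and> c < b)"
    proof
      assume "f < c \<and> c < b"
      then have "c \<in> dom P" using \<open>c \<in> dom ?P\<close> by auto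
      then show False using dv[of c] \<open>f < c \<and> c < b\<close> by auto
    qed
  qed
  moreover have "pm \<sigma> ?P f b" unfolding pm_def p_increasing_def p_decreasing_def
    using f okP(6) nod by auto
  ultimately show ?thesis using sub by auto
qed


lemma pm_dom_le: "pm \<sigma> Q aJ b \<Longrightarrow> okm a b Q \<Longrightarrow> a \<le> aJ"
  using pm_basic[of \<sigma> Q aJ b] unfolding okm_def by auto

lemma okm_dom_finite: "okm a b Q \<Longrightarrow> finite (dom Q)"
  unfolding okm_def pisom_def by auto

lemma nbr_dom:
  assumes ok: "okm a b Q" and pmJ: "pm \<sigma> Q aJ b" and x: "aJ < x" "x < b" "x \<notin> dom Q"
  shows "\<exists>Q'. okm a b Q' \<and> pm \<sigma> Q' aJ b \<and> Q \<subseteq>\<^sub>m Q' \<and> x \<in> dom Q'"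
proof -
  have fin: "finite (dom Q)" using okm_dom_finite[OF ok] .
  have pi: "pisom Q" using ok unfolding okm_def by auto
  have bas: "aJ < b" "Q aJ = Some aJ" "Q b = Some b" using pm_basic[OF pmJ] by auto
  have aJa: "a \<le> aJ" using pm_dom_le[OF pmJ ok] .
  define L where "L = {d\<in>dom Q. d < x}"
  define H where "H = {d\<in>dom Q. x < d}"
  have Lne: "aJ \<in> L" using bas x unfolding L_def by auto
  have Hne: "b \<in> H" using bas x unfolding H_def by auto
  have finL: "finite L" "finite H" using fin unfolding L_def H_def by auto
  define lo where "lo = Max L"
  define hi where "hi = Min H"
  have lo: "lo \<in> dom Q" "lo < x" "aJ \<le> lo" using Max_in[OF finL(1)] Lne Max_ge[OF finL(1) Lne]
    unfolding lo_def L_def by auto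
  have hi: "hi \<in> dom Q" "x < hi" "hi \<le> b" using Min_in[OF finL(2)] Hne Min_le[OF finL(2) Hne]
    unfolding hi_def H_def by auto
  have lomax: "\<And>d. d \<in> dom Q \<Longrightarrow> d < x \<Longrightarrow> d \<le> lo" using Max_ge[OF finL(1)] unfolding lo_def L_def by auto
  have himin: "\<And>d. d \<in> dom Q \<Longrightarrow> x < d \<Longrightarrow> hi \<le> d" using Min_le[OF finL(2)] unfolding hi_def H_def by auto
  obtain ql where ql: "Q lo = Some ql" using lo by auto
  obtain qh where qh: "Q hi = Some qh" using hi by auto
  have qlqh: "ql < qh" using pisom_less[OF pi ql qh] lo hi by auto
  have lsgn: "\<not> \<sigma> \<Longrightarrow> ql < x"
  proof -
    assume ns: "\<not> \<sigma>"
    show "ql < x"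
    proof (cases "lo = aJ")
      case True then show ?thesis using ql bas lo x by auto
    next
      case False
      then have "aJ < lo" using lo by auto
      then show ?thesis using pm_sign[OF pmJ lo(1)] ns ql lo x bas by auto
    qed
  qed
  have hsgn: "\<sigma> \<Longrightarrow> x < qh"
  proof -
    assume ns: "\<sigma>"
    show "x < qh"
    proof (cases "hi = b")
      case True then show ?thesis using qh bas hi x by auto
    next
      case False
      then have "hi < b" using hi by auto
      moreover have "aJ < hi" using hi x by auto
      ultimately show ?thesis using pm_sign[OF pmJ hi(1)] ns qh hi by auto
    qed
  qed
  define v where "v = (if \<sigma> then (max ql x + qh) / 2 else (ql + min x qh) / 2)"
  have v: "ql < v" "v < qh" "if \<sigma> then v > x else v < x"
    using qlqh lsgn hsgn unfolding v_def by (auto simp: max_def min_def split: if_splits)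
  let ?Q = "gext Q {x} id (\<lambda>_. v)"
  have r: "okm a b ?Q \<and> pm \<sigma> ?Q aJ b \<and> Q \<subseteq>\<^sub>m ?Q"
  proof (rule add_graph[OF ok pmJ aJa])
    show "\<forall>d\<in>dom Q. \<forall>y\<in>{x}. (d < id y \<longrightarrow> the (Q d) < v) \<and> (id y < d \<longrightarrow> v < the (Q d))"
    proof (intro ballI conjI impI)
      fix d y assume d: "d \<in> dom Q" and y: "y \<in> {x}"
      obtain qd where qd: "Q d = Some qd" using d by auto
      { assume "d < id y"
        then have "d \<le> lo" using lomax d y by auto
        then have "qd \<le> ql" using pisom_le_iff[OF pi qd ql] by auto
        then show "the (Q d) < v" using qd v by auto }
      { assume "id y < d"
        then have "hi \<le> d" using himin d y by auto
        then have "qh \<le> qd" using pisom_le_iff[OF pi qh qd] by auto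
        then show "v < the (Q d)" using qd v by auto }
    qed
  qed (use x v in auto)
  moreover have "x \<in> dom ?Q" unfolding gext_dom by auto
  ultimately show ?thesis by blast
qed

lemma nbr_ran:
  assumes ok: "okm a b Q" and pmJ: "pm \<sigma> Q aJ b" and x: "aJ < x" "x < b" "x \<notin> ran Q"
  shows "\<exists>Q'. okm a b Q' \<and> pm \<sigma> Q' aJ b \<and> Q \<subseteq>\<^sub>m Q' \<and> x \<in> ran Q'"
proof -
  have fin: "finite (dom Q)" using okm_dom_finite[OF ok] .
  have pi: "pisom Q" using ok unfolding okm_def by auto
  have bas: "aJ < b" "Q aJ = Some aJ" "Q b = Some b" using pm_basic[OF pmJ] by auto
  have aJa: "a \<le> aJ" using pm_dom_le[OF pmJ ok] .
  define L where "L = {d\<in>dom Q. the (Q d) < x}"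
  define H where "H = {d\<in>dom Q. x < the (Q d)}"
  have Lne: "aJ \<in> L" using bas x unfolding L_def by auto
  have Hne: "b \<in> H" using bas x unfolding H_def by auto
  have finL: "finite L" "finite H" using fin unfolding L_def H_def by auto
  define lo where "lo = Max L"
  define hi where "hi = Min H"
  have lo: "lo \<in> dom Q" "the (Q lo) < x" "aJ \<le> lo" using Max_in[OF finL(1)] Lne Max_ge[OF finL(1) Lne]
    unfolding lo_def L_def by auto
  have hi: "hi \<in> dom Q" "x < the (Q hi)" "hi \<le> b" using Min_in[OF finL(2)] Hne Min_le[OF finL(2) Hne]
    unfolding hi_def H_def by auto
  have lomax: "\<And>d. d \<in> dom Q \<Longrightarrow> the (Q d) < x \<Longrightarrow> d \<le> lo" using Max_ge[OF finL(1)] unfolding lo_def L_def by auto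
  have himin: "\<And>d. d \<in> dom Q \<Longrightarrow> x < the (Q d) \<Longrightarrow> hi \<le> d" using Min_le[OF finL(2)] unfolding hi_def H_def by auto
  obtain ql where ql: "Q lo = Some ql" using lo by auto
  obtain qh where qh: "Q hi = Some qh" using hi by auto
  have lohi: "lo < hi" using pisom_less_iff[OF pi ql qh] lo(2) hi(2) ql qh by auto
  have gap: "\<And>d. d \<in> dom Q \<Longrightarrow> d \<le> lo \<or> hi \<le> d"
  proof -
    fix d assume d: "d \<in> dom Q"
    obtain qd where qd: "Q d = Some qd" using d by auto
    have "qd \<noteq> x" using x(3) ranI[of Q d qd] qd by auto
    then have "qd < x \<or> x < qd" by auto
    then show "d \<le> lo \<or> hi \<le> d" using lomax[OF d] himin[OF d] qd by auto
  qed
  have lb: "lo < b" using lo ql bas pisom_less_iff[OF pi ql bas(3)] x by auto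
  have lsgn: "\<sigma> \<Longrightarrow> lo < x"
  proof -
    assume ns: "\<sigma>"
    show "lo < x"
    proof (cases "lo = aJ")
      case True then show ?thesis using x by auto
    next
      case False
      then have "aJ < lo" using lo by auto
      then show ?thesis using pm_sign[OF pmJ lo(1)] ns ql lo lb by auto
    qed
  qed
  have hsgn: "\<not> \<sigma> \<Longrightarrow> x < hi"
  proof -
    assume ns: "\<not> \<sigma>"
    show "x < hi"
    proof (cases "hi = b")
      case True then show ?thesis using x by auto
    next
      case False
      then have "hi < b" using hi by auto
      moreover have "aJ < hi" using lohi lo by auto
      ultimately show ?thesis using pm_sign[OF pmJ hi(1)] ns qh hi by auto
    qed
  qed
  define y where "y = (if \<sigma> then (lo + min x hi) / 2 else (max lo x + hi) / 2)"
  have y: "lo < y" "y < hi" "if \<sigma> then y < x else x < y"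
    using lohi lsgn hsgn unfolding y_def by (auto simp: max_def min_def split: if_splits)
  have ynd: "y \<notin> dom Q"
  proof
    assume "y \<in> dom Q"
    then have "y \<le> lo \<or> hi \<le> y" by (rule gap)
    then show False using y(1,2) by auto
  qed
  have yJ: "aJ < y" "y < b" using y(1,2) lo(3) hi(3) by auto
  have ysg: "if \<sigma> then x > y else x < y" using y(3) by auto
  let ?Q = "gext Q {y} id (\<lambda>_. x)"
  have r: "okm a b ?Q \<and> pm \<sigma> ?Q aJ b \<and> Q \<subseteq>\<^sub>m ?Q"
  proof (rule add_graph[OF ok pmJ aJa])
    show "\<forall>d\<in>dom Q. \<forall>z\<in>{y}. (d < id z \<longrightarrow> the (Q d) < x) \<and> (id z < d \<longrightarrow> x < the (Q d))"
    proof (intro ballI conjI impI)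
      fix d z assume d: "d \<in> dom Q" and z: "z \<in> {y}"
      obtain qd where qd: "Q d = Some qd" using d by auto
      { assume "d < id z"
        then have "d \<le> lo" using gap[OF d] z y by auto
        then have "qd \<le> ql" using pisom_le_iff[OF pi qd ql] by auto
        then show "the (Q d) < x" using qd ql lo by auto }
      { assume "id z < d"
        then have "hi \<le> d" using gap[OF d] z y by auto
        then have "qh \<le> qd" using pisom_le_iff[OF pi qh qd] by auto
        then show "x < the (Q d)" using qd qh hi by auto }
    qed
  next
    show "finite {y}" by simp
  next
    show "\<forall>z\<in>{y}. id z \<notin> dom Q \<and> aJ < id z \<and> id z < b" using ynd yJ by simp
  next
    show "\<forall>z\<in>{y}. if \<sigma> then id z < x else x < id z" using ysg by simp
  next
    show "\<forall>z\<in>{y}. \<forall>z'\<in>{y}. id z < id z' \<longrightarrow> x < x" by simp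
  next
    show "inj_on id {y}" by simp
  qed
  moreover have "?Q y = Some x" using gext_alpha[of id "{y}" y Q "\<lambda>_. x"] by simp
  then have "x \<in> ran ?Q" by (rule ranI)
  ultimately show ?thesis by blast
qed

lemma map_le_implies_ran_le: assumes "f \<subseteq>\<^sub>m g" shows "ran f \<subseteq> ran g"
proof
  fix y assume "y \<in> ran f"
  then obtain x where "f x = Some y" by (auto simp: ran_def)
  then have "g x = Some y" using map_le_Some[OF assms] by simp
  then show "y \<in> ran g" by (rule ranI)
qed

lemma nbr_set:
  assumes ok: "okm a b Q" and pmJ: "pm \<sigma> Q aJ b" and fin: "finite X" and X: "X \<subseteq> {aJ<..<b}"
  shows "\<exists>Q'. okm a b Q' \<and> pm \<sigma> Q' aJ b \<and> Q \<subseteq>\<^sub>m Q' \<and>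
           (\<forall>x\<in>X. if \<sigma> then x \<in> dom Q' else x \<in> ran Q')"
  using fin X
proof (induction X rule: finite_induct)
  case empty then show ?case using ok pmJ by auto
next
  case (insert x X)
  then obtain Q1 where Q1: "okm a b Q1" "pm \<sigma> Q1 aJ b" "Q \<subseteq>\<^sub>m Q1"
     "\<forall>x\<in>X. if \<sigma> then x \<in> dom Q1 else x \<in> ran Q1" by auto
  have x: "aJ < x" "x < b" using insert by auto
  have "\<exists>Q2. okm a b Q2 \<and> pm \<sigma> Q2 aJ b \<and> Q1 \<subseteq>\<^sub>m Q2 \<and> (if \<sigma> then x \<in> dom Q2 else x \<in> ran Q2)"
  proof (cases "if \<sigma> then x \<in> dom Q1 else x \<in> ran Q1")
    case True then show ?thesis using Q1 by (intro exI[of _ Q1]) auto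
  next
    case False
    show ?thesis
    proof (cases \<sigma>)
      case True
      then show ?thesis using nbr_dom[OF Q1(1,2) x] False by auto
    next
      case nF: False
      then show ?thesis using nbr_ran[OF Q1(1,2) x] False by auto
    qed
  qed
  then obtain Q2 where Q2: "okm a b Q2" "pm \<sigma> Q2 aJ b" "Q1 \<subseteq>\<^sub>m Q2"
    "if \<sigma> then x \<in> dom Q2 else x \<in> ran Q2" by blast
  have "\<forall>y\<in>X. if \<sigma> then y \<in> dom Q2 else y \<in> ran Q2"
    using Q1(4) Q2(3) map_le_implies_dom_le[OF Q2(3)] map_le_implies_ran_le[OF Q2(3)]
    by (auto split: if_splits)
  then have "\<forall>y\<in>insert x X. if \<sigma> then y \<in> dom Q2 else y \<in> ran Q2" using Q2(4) by auto
  then show ?case using Q2(1,2) map_le_trans[OF Q1(3) Q2(3)] by blast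
qed


fun selm :: "gen \<Rightarrow> (rat \<rightharpoonup> rat) \<Rightarrow> (rat \<rightharpoonup> rat) \<Rightarrow> (rat \<rightharpoonup> rat)" where
  "selm Gs P Q = P" | "selm Gt P Q = Q"

fun oth :: "gen \<Rightarrow> gen" where "oth Gs = Gt" | "oth Gt = Gs"

lemma letter_act_sel: "letter_act P Q (g,\<sigma>) = (if \<sigma> then selm g P Q else pinv (selm g P Q))"
  by (cases g; cases \<sigma>) auto

lemma letter_mono:
  assumes "pisom P" "pisom Q" "pisom P'" "pisom Q'" "P \<subseteq>\<^sub>m P'" "Q \<subseteq>\<^sub>m Q'"
    "letter_act P Q l x = Some y"
  shows "letter_act P' Q' l x = Some y"
proof -
  obtain g \<sigma> where l: "l = (g,\<sigma>)" by (cases l)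
  have pi: "pisom (selm g P Q)" "pisom (selm g P' Q')" using assms by (cases g; auto)+
  have le: "selm g P Q \<subseteq>\<^sub>m selm g P' Q'" using assms by (cases g) auto
  show ?thesis
  proof (cases \<sigma>)
    case True
    then show ?thesis using assms(7) l map_le_Some[OF le] by (simp add: letter_act_sel)
  next
    case False
    then have "selm g P Q y = Some x" using assms(7) l pinv_Some[OF pi(1)] by (simp add: letter_act_sel)
    then have "selm g P' Q' y = Some x" using map_le_Some[OF le] by simp
    then show ?thesis using False l pinv_Some[OF pi(2)] by (simp add: letter_act_sel)
  qed
qed

lemma wev_mono:
  assumes "pisom P" "pisom Q" "pisom P'" "pisom Q'" "P \<subseteq>\<^sub>m P'" "Q \<subseteq>\<^sub>m Q'"
  shows "wev P Q v c = Some y \<Longrightarrow> wev P' Q' v c = Some y"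
proof (induction v arbitrary: y)
  case Nil then show ?case by simp
next
  case (Cons l v)
  then obtain z where z: "wev P Q v c = Some z" "letter_act P Q l z = Some y"
    by (cases "wev P Q v c") auto
  then show ?case using Cons.IH[OF z(1)] letter_mono[OF assms z(2)] by simp
qed

lemma letter_le:
  assumes "pisom P" "pisom Q" "letter_act P Q l x = Some y" "letter_act P Q l x' = Some y'" "x \<le> x'"
  shows "y \<le> y'"
proof -
  obtain g \<sigma> where l: "l = (g,\<sigma>)" by (cases l)
  have pi: "pisom (selm g P Q)" using assms by (cases g; auto)
  show ?thesis
  proof (cases \<sigma>)
    case True
    then show ?thesis using assms(3,4,5) l pisom_le_iff[OF pi] by (simp add: letter_act_sel)
  next
    case False
    then have "selm g P Q y = Some x" "selm g P Q y' = Some x'"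
      using assms(3,4) l pinv_Some[OF pi] by (simp_all add: letter_act_sel)
    then show ?thesis using pisom_le_iff[OF pi] assms(5) by auto
  qed
qed

lemma wev_le:
  assumes "pisom P" "pisom Q"
  shows "wev P Q v c = Some y \<Longrightarrow> wev P Q v c' = Some y' \<Longrightarrow> c \<le> c' \<Longrightarrow> y \<le> y'"
proof (induction v arbitrary: y y')
  case Nil then show ?case by simp
next
  case (Cons l v)
  obtain z where z: "wev P Q v c = Some z" "letter_act P Q l z = Some y"
    using Cons.prems by (cases "wev P Q v c") auto
  obtain z' where z': "wev P Q v c' = Some z'" "letter_act P Q l z' = Some y'"
    using Cons.prems by (cases "wev P Q v c'") auto
  show ?case using Cons.IH[OF z(1) z'(1) Cons.prems(3)] letter_le[OF assms z(2) z'(2)] by simp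
qed

definition hf :: "rat \<Rightarrow> rat \<Rightarrow> rat \<Rightarrow> rat \<Rightarrow> rat" where
  "hf a b R x = R + (b - R) * ((x - a) / (b - a))"

lemma hf_range:
  assumes "a < b" "R < b" "a < x" "x < b" shows "R < hf a b R x" "hf a b R x < b"
proof -
  have t: "0 < (x - a) / (b - a)" "(x - a) / (b - a) < 1" using assms by (auto simp: field_simps)
  have "0 < (b - R) * ((x - a) / (b - a))" using t assms by auto
  then show "R < hf a b R x" unfolding hf_def by auto
  have "(b - R) * ((x - a) / (b - a)) < (b - R) * 1" using t assms by (intro mult_strict_left_mono) auto
  then show "hf a b R x < b" unfolding hf_def by auto
qed

lemma hf_mono:
  assumes "a < b" "R < b" "x < y" shows "hf a b R x < hf a b R y"
proof -
  have "(x - a) / (b - a) < (y - a) / (b - a)" using assms by (intro divide_strict_right_mono) auto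
  then have "(b - R) * ((x - a) / (b - a)) < (b - R) * ((y - a) / (b - a))"
    using assms by (intro mult_strict_left_mono) auto
  then show ?thesis unfolding hf_def by auto
qed

lemma hf_mono_iff:
  assumes "a < b" "R < b" shows "hf a b R x < hf a b R y \<longleftrightarrow> x < y"
  using hf_mono[OF assms, of x y] hf_mono[OF assms, of y x]
  by (metis linorder_neqE_linordered_idom order_less_asym)

lemma gext_ran: "ran (gext P X \<alpha> \<beta>) \<subseteq> ran P \<union> \<beta> ` X"
proof
  fix y assume "y \<in> ran (gext P X \<alpha> \<beta>)"
  then obtain z where z: "gext P X \<alpha> \<beta> z = Some y" by (auto simp: ran_def)
  show "y \<in> ran P \<union> \<beta> ` X"
  proof (cases "z \<in> \<alpha> ` X")
    case True
    then show ?thesis using z unfolding gext_def by (auto intro: inv_into_into)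
  next
    case False
    then have "P z = Some y" using z by (simp add: gext_other)
    then show ?thesis using ranI by fast
  qed
qed

lemma okm_pt_lt_b:
  assumes "okm a b M" "M d = Some e" "d < b" shows "e < b"
  using assms pisom_fix_side(2)[of M b d e] pisom_less[of M d e b b] unfolding okm_def by auto

lemma fsl:
  assumes ok: "okm a b M" and pmf: "pm \<sigma> M f b" and fa: "a \<le> f"
    and finX: "finite X" and Xab: "X \<subseteq> {a<..<b}" and fX: "\<forall>x\<in>X. f < x"
    and below: "\<forall>y\<in>pts M. a < y \<longrightarrow> y < b \<longrightarrow> y \<notin> X \<longrightarrow> (\<forall>x\<in>X. y < x)"
    and disj: "if \<sigma> then X \<inter> dom M = {} else X \<inter> ran M = {}"
    and R1: "\<forall>y\<in>pts M. y < b \<longrightarrow> y \<le> R" and R2: "\<forall>x\<in>X. x \<le> R" and R3: "a \<le> R" "R < b"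
  shows "\<exists>M'. okm a b M' \<and> pm \<sigma> M' f b \<and> M \<subseteq>\<^sub>m M' \<and>
     (\<forall>x\<in>X. if \<sigma> then M' x = Some (hf a b R x) else M' (hf a b R x) = Some x) \<and>
     dom M' \<subseteq> dom M \<union> X \<union> hf a b R ` X \<and> ran M' \<subseteq> ran M \<union> X \<union> hf a b R ` X \<and>
     (if \<sigma> then dom M' \<subseteq> dom M \<union> X else ran M' \<subseteq> ran M \<union> X)"
proof -
  let ?h = "hf a b R"
  have ab: "a < b" using ok unfolding okm_def by auto
  have hr: "\<And>x. x \<in> X \<Longrightarrow> R < ?h x \<and> ?h x < b" using hf_range[OF ab R3(2)] Xab by auto
  have hm: "\<And>x y. ?h x < ?h y \<longleftrightarrow> x < y" using hf_mono_iff[OF ab R3(2)] by auto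
  have pi: "pisom M" using ok unfolding okm_def by auto
  have Mb: "M b = Some b" using ok unfolding okm_def by auto
  have ptd: "\<And>d. d \<in> dom M \<Longrightarrow> d \<in> pts M" unfolding pts_def by auto
  have ptr: "\<And>d e. M d = Some e \<Longrightarrow> e \<in> pts M" unfolding pts_def by (auto intro: ranI)
  have fd: "f \<in> dom M" "f < b" using pm_basic[OF pmf] by auto
  have fR: "f \<le> R" using R1 ptd[OF fd(1)] fd(2) by auto
  have domab: "\<And>d. d \<in> dom M \<Longrightarrow> a \<le> d \<and> d \<le> b" using ok unfolding okm_def by auto
  show ?thesis
  proof (cases \<sigma>)
    case True
    let ?M = "gext M X id ?h"
    have r: "okm a b ?M \<and> pm \<sigma> ?M f b \<and> M \<subseteq>\<^sub>m ?M"
    proof (rule add_graph[OF ok pmf fa finX])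
      show "\<forall>x\<in>X. id x \<notin> dom M \<and> f < id x \<and> id x < b" using disj True fX Xab by auto
      show "\<forall>x\<in>X. if \<sigma> then id x < ?h x else ?h x < id x" using True hr R2 by fastforce
      show "\<forall>x\<in>X. \<forall>y\<in>X. id x < id y \<longrightarrow> ?h x < ?h y" using hm by auto
      show "inj_on id X" by simp
      show "\<forall>d\<in>dom M. \<forall>x\<in>X. (d < id x \<longrightarrow> the (M d) < ?h x) \<and> (id x < d \<longrightarrow> ?h x < the (M d))"
      proof (intro ballI conjI impI)
        fix d x assume d: "d \<in> dom M" and x: "x \<in> X"
        obtain e where e: "M d = Some e" using d by auto
        { assume "d < id x"
          then have "e < b" using okm_pt_lt_b[OF ok e] x Xab by auto
          then have "e \<le> R" using R1 ptr[OF e] by auto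
          then show "the (M d) < ?h x" using e hr[OF x] by auto }
        { assume dx: "id x < d"
          have "d \<notin> X" using d disj True by auto
          have "a < d" using dx x Xab by auto
          have "d = b"
          proof (rule ccontr)
            assume "d \<noteq> b" then have "d < b" using domab[OF d] by auto
            then have "\<forall>x\<in>X. d < x" using below ptd[OF d] \<open>a < d\<close> \<open>d \<notin> X\<close> by blast
            then show False using x dx by force
          qed
          then show "?h x < the (M d)" using e Mb hr[OF x] by auto }
      qed
    qed
    moreover have "\<forall>x\<in>X. ?M x = Some (?h x)" using gext_alpha[of id X _ M ?h] by auto
    moreover have "dom ?M \<subseteq> dom M \<union> X" unfolding gext_dom by auto
    moreover have "ran ?M \<subseteq> ran M \<union> ?h ` X" using gext_ran[of M X id ?h] .
    ultimately show ?thesis using True by (intro exI[of _ ?M]) auto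
  next
    case False
    let ?M = "gext M X ?h id"
    have inj: "inj_on ?h X" by (rule strict_mono_inj) (use hm in auto)
    have r: "okm a b ?M \<and> pm \<sigma> ?M f b \<and> M \<subseteq>\<^sub>m ?M"
    proof (rule add_graph[OF ok pmf fa finX])
      show "\<forall>x\<in>X. ?h x \<notin> dom M \<and> f < ?h x \<and> ?h x < b"
      proof
        fix x assume x: "x \<in> X"
        have "?h x \<notin> dom M"
        proof
          assume hd: "?h x \<in> dom M"
          then have "?h x \<le> R" using R1 ptd[OF hd] hr[OF x] by auto
          then show False using hr[OF x] by auto
        qed
        then show "?h x \<notin> dom M \<and> f < ?h x \<and> ?h x < b" using hr[OF x] fR by auto
      qed
      show "\<forall>x\<in>X. if \<sigma> then ?h x < id x else id x < ?h x" using False hr R2 by fastforce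
      show "\<forall>x\<in>X. \<forall>y\<in>X. ?h x < ?h y \<longrightarrow> id x < id y" using hm by auto
      show "inj_on ?h X" by (rule inj)
      show "\<forall>d\<in>dom M. \<forall>x\<in>X. (d < ?h x \<longrightarrow> the (M d) < id x) \<and> (?h x < d \<longrightarrow> id x < the (M d))"
      proof (intro ballI conjI impI)
        fix d x assume d: "d \<in> dom M" and x: "x \<in> X"
        obtain e where e: "M d = Some e" using d by auto
        { assume dx: "d < ?h x"
          then have "d < b" using hr[OF x] by auto
          then have eb: "e < b" using okm_pt_lt_b[OF ok e] by auto
          have "e \<notin> X" using e disj False by (auto intro: ranI)
          have "e < x"
          proof (cases "a < e")
            case True then show ?thesis using below ptr[OF e] eb \<open>e \<notin> X\<close> x by auto
          next
            case False then show ?thesis using x Xab by auto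
          qed
          then show "the (M d) < id x" using e by auto }
        { assume dx: "?h x < d"
          have "d = b"
          proof (rule ccontr)
            assume "d \<noteq> b" then have "d < b" using domab[OF d] by auto
            then have "d \<le> R" using R1 ptd[OF d] by auto
            then show False using dx hr[OF x] by auto
          qed
          then show "id x < the (M d)" using e Mb x Xab by auto }
      qed
    qed
    moreover have "\<forall>x\<in>X. ?M (?h x) = Some x" using gext_alpha[OF inj] by auto
    moreover have "dom ?M \<subseteq> dom M \<union> ?h ` X" unfolding gext_dom by auto
    moreover have "ran ?M \<subseteq> ran M \<union> X" using gext_ran[of M X ?h id] by auto
    ultimately show ?thesis using False by (intro exI[of _ ?M]) auto
  qed
qed


definition FC :: "rat \<Rightarrow> rat \<Rightarrow> (rat \<rightharpoonup> rat) \<Rightarrow> (rat \<rightharpoonup> rat) \<Rightarrow> rat set \<Rightarrow> gen \<Rightarrow> bool \<Rightarrow> bool" where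
  "FC a b P Q X g \<sigma> \<longleftrightarrow> okm a b P \<and> okm a b Q \<and> finite X \<and> X \<subseteq> {a<..<b} \<and>
     (\<forall>y\<in>pts P \<union> pts Q. a < y \<longrightarrow> y < b \<longrightarrow> y \<notin> X \<longrightarrow> (\<forall>x\<in>X. y < x)) \<and>
     X \<inter> pts (selm (oth g) P Q) = {} \<and>
     (if \<sigma> then X \<inter> dom (selm g P Q) = {} else X \<inter> ran (selm g P Q) = {}) \<and>
     (\<exists>f. a \<le> f \<and> pm \<sigma> (selm g P Q) f b \<and> (\<forall>x\<in>X. f < x))"

definition upP :: "gen \<Rightarrow> (rat \<rightharpoonup> rat) \<Rightarrow> (rat \<rightharpoonup> rat) \<Rightarrow> (rat \<rightharpoonup> rat)" where
  "upP g M P = (if g = Gs then M else P)"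
definition upQ :: "gen \<Rightarrow> (rat \<rightharpoonup> rat) \<Rightarrow> (rat \<rightharpoonup> rat) \<Rightarrow> (rat \<rightharpoonup> rat)" where
  "upQ g M Q = (if g = Gt then M else Q)"

lemma sel_up1: "selm g (upP g M P) (upQ g M Q) = M" by (cases g) (auto simp: upP_def upQ_def)
lemma sel_up2: "selm (oth g) (upP g M P) (upQ g M Q) = selm (oth g) P Q" by (cases g) (auto simp: upP_def upQ_def)
lemma pts_sel: "pts P \<union> pts Q = pts (selm g P Q) \<union> pts (selm (oth g) P Q)" by (cases g) auto
lemma okm_sel: "okm a b P \<and> okm a b Q \<longleftrightarrow> okm a b (selm g P Q) \<and> okm a b (selm (oth g) P Q)"
  by (cases g) auto
lemma up_le: "selm g P Q \<subseteq>\<^sub>m M \<Longrightarrow> P \<subseteq>\<^sub>m upP g M P \<and> Q \<subseteq>\<^sub>m upQ g M Q"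
  by (cases g) (auto simp: upP_def upQ_def)

lemma okm_pts_finite: "okm a b M \<Longrightarrow> finite (pts M)"
  unfolding pts_def using okm_dom_finite finite_ran by blast

definition Rm :: "rat \<Rightarrow> rat \<Rightarrow> rat set \<Rightarrow> rat" where
  "Rm a b S = Max (insert a (S \<inter> {..<b}))"

lemma Rm_props:
  assumes "finite S" "a < b"
  shows "a \<le> Rm a b S" "Rm a b S < b" "\<And>y. y \<in> S \<Longrightarrow> y < b \<Longrightarrow> y \<le> Rm a b S"
    "Rm a b S = a \<or> (Rm a b S \<in> S \<and> Rm a b S < b)"
proof -
  have fin: "finite (insert a (S \<inter> {..<b}))" using assms by auto
  show "a \<le> Rm a b S" unfolding Rm_def using Max_ge[OF fin] by auto
  show "Rm a b S < b" unfolding Rm_def using Max_in[OF fin] assms by auto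
  show "\<And>y. y \<in> S \<Longrightarrow> y < b \<Longrightarrow> y \<le> Rm a b S" unfolding Rm_def using Max_ge[OF fin] by auto
  show "Rm a b S = a \<or> (Rm a b S \<in> S \<and> Rm a b S < b)" unfolding Rm_def using Max_in[OF fin] by auto
qed

lemma okm_pts_le: "okm a b M \<Longrightarrow> y \<in> pts M \<Longrightarrow> a \<le> y \<and> y \<le> b"
  using okm_pts by fastforce

lemma core:
  assumes okP: "okm a b P" and okQ: "okm a b Q"
    and pmf: "pm \<sigma> (selm g P Q) f b" and fa: "a \<le> f"
    and finX: "finite X" and Xab: "X \<subseteq> {a<..<b}" and fX: "\<forall>x\<in>X. f < x"
    and below: "\<forall>y\<in>pts (selm g P Q). a < y \<longrightarrow> y < b \<longrightarrow> y \<notin> X \<longrightarrow> (\<forall>x\<in>X. y < x)"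
    and disj: "if \<sigma> then X \<inter> dom (selm g P Q) = {} else X \<inter> ran (selm g P Q) = {}"
  shows "\<exists>P' Q' h. P \<subseteq>\<^sub>m P' \<and> Q \<subseteq>\<^sub>m Q' \<and> FC a b P' Q' (h ` X) g \<sigma> \<and>
           (\<forall>x\<in>X. letter_act P' Q' (g,\<sigma>) x = Some (h x)) \<and> (\<forall>x\<in>X. x < h x) \<and> inj_on h X"
proof -
  let ?M = "selm g P Q" and ?N = "selm (oth g) P Q"
  have ab: "a < b" using okP unfolding okm_def by auto
  have okM: "okm a b ?M" and okN: "okm a b ?N" using okm_sel[of a b P Q g] okP okQ by auto
  define S where "S = pts P \<union> pts Q \<union> X"
  have finS: "finite S" unfolding S_def using okm_pts_finite okP okQ finX by auto
  define R where "R = Rm a b S"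
  note Rp = Rm_props[OF finS ab, folded R_def]
  let ?h = "hf a b R"
  have hr: "\<And>x. x \<in> X \<Longrightarrow> R < ?h x \<and> ?h x < b" using hf_range[OF ab Rp(2)] Xab by auto
  have hm: "\<And>x y. ?h x < ?h y \<longleftrightarrow> x < y" using hf_mono_iff[OF ab Rp(2)] by auto
  have inj: "inj_on ?h X" by (rule strict_mono_inj) (use hm in auto)
  have RM: "\<forall>y\<in>pts ?M. y < b \<longrightarrow> y \<le> R" using Rp(3) pts_sel[of P Q g] unfolding S_def by auto
  have RN: "\<forall>y\<in>pts ?N. y < b \<longrightarrow> y \<le> R" using Rp(3) pts_sel[of P Q g] unfolding S_def by auto
  have RX: "\<forall>x\<in>X. x \<le> R" using Rp(3) Xab unfolding S_def by auto
  obtain M' where M': "okm a b M'" "pm \<sigma> M' f b" "?M \<subseteq>\<^sub>m M'"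
     "\<forall>x\<in>X. if \<sigma> then M' x = Some (?h x) else M' (?h x) = Some x"
     "dom M' \<subseteq> dom ?M \<union> X \<union> ?h ` X" "ran M' \<subseteq> ran ?M \<union> X \<union> ?h ` X"
     "if \<sigma> then dom M' \<subseteq> dom ?M \<union> X else ran M' \<subseteq> ran ?M \<union> X"
    using fsl[OF okM pmf fa finX Xab fX below disj RM RX Rp(1,2)] by blast
  let ?P = "upP g M' P" and ?Q = "upQ g M' Q"
  have s1: "selm g ?P ?Q = M'" and s2: "selm (oth g) ?P ?Q = ?N" by (rule sel_up1, rule sel_up2)
  have le: "P \<subseteq>\<^sub>m ?P" "Q \<subseteq>\<^sub>m ?Q" using up_le[OF M'(3)] by auto
  have fpts: "f \<in> pts ?M" "f < b" using pm_basic[OF pmf] unfolding pts_def by auto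
  have fR: "f \<le> R" using RM fpts by auto
  have ptsM': "pts M' \<subseteq> pts ?M \<union> X \<union> ?h ` X" using M'(5,6) unfolding pts_def by auto
  have FCr: "FC a b ?P ?Q (?h ` X) g \<sigma>"
    unfolding FC_def
  proof (intro conjI)
    show "okm a b ?P" "okm a b ?Q" using okm_sel[of a b ?P ?Q g] s1 s2 M'(1) okN by auto
    show "finite (?h ` X)" using finX by auto
    show "?h ` X \<subseteq> {a<..<b}" using hr Rp(1) by fastforce
    show "\<forall>y\<in>pts ?P \<union> pts ?Q. a < y \<longrightarrow> y < b \<longrightarrow> y \<notin> ?h ` X \<longrightarrow> (\<forall>x\<in>?h ` X. y < x)"
    proof (intro ballI impI)
      fix y x' assume y: "y \<in> pts ?P \<union> pts ?Q" "a < y" "y < b" "y \<notin> ?h ` X" and x': "x' \<in> ?h ` X"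
      have "y \<in> pts M' \<union> pts ?N" using y(1) pts_sel[of ?P ?Q g] s1 s2 by auto
      then have "y \<in> pts ?M \<union> X \<union> pts ?N" using ptsM' y(4) by auto
      then have "y \<le> R" using RM RN RX y(3) by auto
      obtain x where x: "x \<in> X" "x' = ?h x" using x' by blast
      show "y < x'" using hr[OF x(1)] x(2) \<open>y \<le> R\<close> by auto
    qed
    show "?h ` X \<inter> pts (selm (oth g) ?P ?Q) = {}"
    proof -
      { fix x assume x: "x \<in> X" and "?h x \<in> pts ?N"
        then have "?h x \<le> R" using RN hr[OF x] by auto
        then have False using hr[OF x] by auto }
      then show ?thesis using s2 by auto
    qed
    show "if \<sigma> then ?h ` X \<inter> dom (selm g ?P ?Q) = {} else ?h ` X \<inter> ran (selm g ?P ?Q) = {}"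
    proof -
      have nod: "\<forall>x\<in>X. ?h x \<notin> (if \<sigma> then dom M' else ran M')"
      proof (intro ballI notI)
        fix x assume x: "x \<in> X" and y: "?h x \<in> (if \<sigma> then dom M' else ran M')"
        then have "?h x \<in> pts ?M \<union> X" using M'(7) unfolding pts_def by (auto split: if_splits)
        then have "?h x \<le> R" using RM RX hr[OF x] by auto
        then show False using hr[OF x] by auto
      qed
      show ?thesis
      proof (cases \<sigma>)
        case True then show ?thesis using nod s1 by (simp only: if_True) blast
      next
        case False then show ?thesis using nod s1 by (simp only: if_False) blast
      qed
    qed
    show "\<exists>f. a \<le> f \<and> pm \<sigma> (selm g ?P ?Q) f b \<and> (\<forall>x\<in>?h ` X. f < x)"
      using fa M'(2) s1 fR hr by (intro exI[of _ f]) fastforce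
  qed
  have pim: "pisom M'" using M'(1) unfolding okm_def by auto
  have la: "\<forall>x\<in>X. letter_act ?P ?Q (g,\<sigma>) x = Some (?h x)"
  proof
    fix x assume x: "x \<in> X"
    show "letter_act ?P ?Q (g,\<sigma>) x = Some (?h x)"
    proof (cases \<sigma>)
      case True then show ?thesis using M'(4) x s1 by (simp add: letter_act_sel)
    next
      case False then show ?thesis using M'(4) x s1 pinv_Some[OF pim] by (simp add: letter_act_sel)
    qed
  qed
  have "\<forall>x\<in>X. x < ?h x" using RX hr by fastforce
  then show ?thesis using le FCr la inj by blast
qed

lemma SG:
  assumes "FC a b P Q X g \<sigma>"
  shows "\<exists>P' Q' h. P \<subseteq>\<^sub>m P' \<and> Q \<subseteq>\<^sub>m Q' \<and> FC a b P' Q' (h ` X) g \<sigma> \<and>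
           (\<forall>x\<in>X. letter_act P' Q' (g,\<sigma>) x = Some (h x)) \<and> (\<forall>x\<in>X. x < h x) \<and> inj_on h X"
proof -
  have F: "okm a b P" "okm a b Q" "finite X" "X \<subseteq> {a<..<b}"
     "\<forall>y\<in>pts P \<union> pts Q. a < y \<longrightarrow> y < b \<longrightarrow> y \<notin> X \<longrightarrow> (\<forall>x\<in>X. y < x)"
     "if \<sigma> then X \<inter> dom (selm g P Q) = {} else X \<inter> ran (selm g P Q) = {}"
    using assms unfolding FC_def by auto
  obtain f where f: "a \<le> f" "pm \<sigma> (selm g P Q) f b" "\<forall>x\<in>X. f < x" using assms unfolding FC_def by auto
  have below: "\<forall>y\<in>pts (selm g P Q). a < y \<longrightarrow> y < b \<longrightarrow> y \<notin> X \<longrightarrow> (\<forall>x\<in>X. y < x)"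
    using F(5) pts_sel[of P Q g] by auto
  show ?thesis using core[OF F(1,2) f(2,1) F(3,4) f(3) below F(6)] .
qed

lemma GC:
  assumes okP: "okm a b P" and okQ: "okm a b Q" and finX: "finite X" and Xab: "X \<subseteq> {a<..<b}"
    and below: "\<forall>y\<in>pts (selm g P Q). a < y \<longrightarrow> y < b \<longrightarrow> (\<forall>x\<in>X. y < x)"
  shows "\<exists>P' Q' h. P \<subseteq>\<^sub>m P' \<and> Q \<subseteq>\<^sub>m Q' \<and> FC a b P' Q' (h ` X) g \<sigma> \<and>
           (\<forall>x\<in>X. letter_act P' Q' (g,\<sigma>) x = Some (h x)) \<and> (\<forall>x\<in>X. x < h x) \<and> inj_on h X"
proof -
  let ?M = "selm g P Q"
  have ab: "a < b" using okP unfolding okm_def by auto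
  have okM: "okm a b ?M" using okm_sel[of a b P Q g] okP okQ by auto
  have finM: "finite (pts ?M)" using okm_pts_finite[OF okM] .
  define Mx where "Mx = Rm a b (pts ?M)"
  note Mp = Rm_props[OF finM ab, folded Mx_def]
  define m where "m = (if X = {} then b else Min X)"
  have mX: "\<forall>x\<in>X. m \<le> x" unfolding m_def using finX by auto
  have am0: "a < m \<and> m \<le> b"
  proof (cases "X = {}")
    case True then show ?thesis unfolding m_def using ab by auto
  next
    case False
    then have "Min X \<in> X" using Min_in[OF finX] by auto
    then show ?thesis unfolding m_def using False Xab by auto
  qed
  then have am: "a < m" "m \<le> b" by auto
  have Mxm: "Mx < m"
    using Mp(4)
  proof
    assume "Mx = a" then show ?thesis using am by auto
  next
    assume h: "Mx \<in> pts ?M \<and> Mx < b"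
    show ?thesis
    proof (cases "X = {}")
      case True then show ?thesis using h unfolding m_def by auto
    next
      case False
      have "a < Mx \<or> Mx = a" using Mp(1) by auto
      then show ?thesis
      proof
        assume "a < Mx"
        then have "\<forall>x\<in>X. Mx < x" using below h by auto
        then show ?thesis unfolding m_def using False Min_in[OF finX False] by auto
      qed (use am in auto)
    qed
  qed
  define f where "f = (Mx + m) / 2"
  have f: "a < f" "f < b" "\<forall>x\<in>X. f < x" "Mx < f"
    using Mxm Mp(1) am mX unfolding f_def by (auto intro: less_le_trans)
  have fbelow: "\<forall>y\<in>pts ?M. y < f \<or> y = b"
  proof
    fix y assume y: "y \<in> pts ?M"
    have "y \<le> b" using okm_pts_le[OF okM y] by auto
    then show "y < f \<or> y = b" using Mp(3)[OF y] f(4) by force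
  qed
  have af: "okm a b (?M(f \<mapsto> f)) \<and> pm \<sigma> (?M(f \<mapsto> f)) f b \<and> ?M \<subseteq>\<^sub>m ?M(f \<mapsto> f)"
    using add_fix[OF okM f(1,2) fbelow] by blast
  let ?P1 = "upP g (?M(f \<mapsto> f)) P" and ?Q1 = "upQ g (?M(f \<mapsto> f)) Q"
  have s1: "selm g ?P1 ?Q1 = ?M(f \<mapsto> f)" and s2: "selm (oth g) ?P1 ?Q1 = selm (oth g) P Q"
    by (rule sel_up1, rule sel_up2)
  have le1: "P \<subseteq>\<^sub>m ?P1" "Q \<subseteq>\<^sub>m ?Q1" using up_le af by auto
  have ok1: "okm a b ?P1" "okm a b ?Q1" using okm_sel[of a b ?P1 ?Q1 g] okm_sel[of a b P Q g] s1 s2 af okP okQ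
    by auto
  have XM: "X \<inter> pts ?M = {}"
  proof -
    { fix x assume x: "x \<in> X" "x \<in> pts ?M"
      have "a < x" "x < b" using Xab x(1) by auto
      then have "\<forall>x'\<in>X. x < x'" using below x(2) by blast
      then have False using x(1) by blast }
    then show ?thesis by auto
  qed
  have ptsM1: "pts (?M(f \<mapsto> f)) \<subseteq> insert f (pts ?M)" unfolding pts_def ran_def by auto
  have below1: "\<forall>y\<in>pts (selm g ?P1 ?Q1). a < y \<longrightarrow> y < b \<longrightarrow> y \<notin> X \<longrightarrow> (\<forall>x\<in>X. y < x)"
    using s1 ptsM1 below f(3) by auto
  have fX: "f \<notin> X" using f(3) by auto
  have disj1: "if \<sigma> then X \<inter> dom (selm g ?P1 ?Q1) = {} else X \<inter> ran (selm g ?P1 ?Q1) = {}"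
    using s1 XM fX ptsM1 unfolding pts_def by auto
  obtain P' Q' h where r: "?P1 \<subseteq>\<^sub>m P'" "?Q1 \<subseteq>\<^sub>m Q'" "FC a b P' Q' (h ` X) g \<sigma>"
     "\<forall>x\<in>X. letter_act P' Q' (g,\<sigma>) x = Some (h x)" "\<forall>x\<in>X. x < h x" "inj_on h X"
  proof -
    have pm1: "pm \<sigma> (selm g ?P1 ?Q1) f b" using s1 af by simp
    have fa: "a \<le> f" using f(1) by simp
    show ?thesis using core[OF ok1 pm1 fa finX Xab f(3) below1 disj1] that by blast
  qed
  show ?thesis using r map_le_trans le1 by blast
qed


lemma lib_unpack:
  assumes L: "liberates_p_el p q P Q w" and mm: "Min (dom p) = Min (dom q)" "Max (dom p) = Max (dom q)"
  shows "okm (Min (dom p)) (Max (dom p)) P" "okm (Min (dom p)) (Max (dom p)) Q" "p \<subseteq>\<^sub>m P" "q \<subseteq>\<^sub>m Q"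
    "reduced w" "w \<noteq> []" "fst (hd w) = Gt"
    "\<forall>c\<in>Ess p \<union> Ess q. wev P Q w c \<noteq> None"
    "Ess p \<union> Ess q \<noteq> {} \<longrightarrow> (\<forall>x\<in>Ess P. the (wev P Q w (Min (Ess p \<union> Ess q))) > x)"
    "\<exists>aJ. (\<forall>c\<in>Ess p \<union> Ess q. aJ < the (wev P Q w c) \<and> the (wev P Q w c) < Max (dom p)) \<and>
          pm (snd (hd w)) Q aJ (Max (dom p))"
proof -
  have l: "pisom P" "pisom Q" "p \<subseteq>\<^sub>m P" "q \<subseteq>\<^sub>m Q" "reduced w" "informative P" "informative Q"
    "Min (dom P) = Min (dom p)" "Min (dom Q) = Min (dom q)" "Max (dom P) = Max (dom p)" "Max (dom Q) = Max (dom q)"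
    "w \<noteq> []" "fst (hd w) = Gt" "\<forall>c\<in>Ess p \<union> Ess q. wev P Q w c \<noteq> None"
    "Ess p \<union> Ess q \<noteq> {} \<longrightarrow> (\<forall>x\<in>Ess P. the (wev P Q w (Min (Ess p \<union> Ess q))) > x)"
    using L unfolding liberates_p_el_def by auto
  obtain aJ where aJ: "\<forall>c\<in>Ess p \<union> Ess q. aJ < the (wev P Q w c) \<and> the (wev P Q w c) < Max (dom q)"
    "if snd (hd w) then p_increasing Q aJ (Max (dom q)) else p_decreasing Q aJ (Max (dom q))"
    using L unfolding liberates_p_el_def by blast
  have pmJ: "pm (snd (hd w)) Q aJ (Max (dom p))" using aJ(2) mm unfolding pm_def by simp
  have fin: "finite (dom Q)" using l(2) unfolding pisom_def by auto
  have "aJ \<in> dom Q" "aJ < Max (dom p)" using pm_basic[OF pmJ] by auto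
  then have ab: "Min (dom p) < Max (dom p)" using Min_le[OF fin] l(9) mm by force
  show "okm (Min (dom p)) (Max (dom p)) P" using informative_okm[OF l(1,6,8)] l(10) ab by simp
  show "okm (Min (dom p)) (Max (dom p)) Q" using informative_okm[OF l(2,7)] l(9,11) mm ab by simp
  show "p \<subseteq>\<^sub>m P" "q \<subseteq>\<^sub>m Q" "reduced w" "w \<noteq> []" "fst (hd w) = Gt"
    "\<forall>c\<in>Ess p \<union> Ess q. wev P Q w c \<noteq> None"
    "Ess p \<union> Ess q \<noteq> {} \<longrightarrow> (\<forall>x\<in>Ess P. the (wev P Q w (Min (Ess p \<union> Ess q))) > x)"
    using l by auto
  show "\<exists>aJ. (\<forall>c\<in>Ess p \<union> Ess q. aJ < the (wev P Q w c) \<and> the (wev P Q w c) < Max (dom p)) \<and>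
          pm (snd (hd w)) Q aJ (Max (dom p))" using aJ(1) pmJ mm by auto
qed

lemma lib_pack:
  assumes mm: "Min (dom p) = Min (dom q)" "Max (dom p) = Max (dom q)"
    and ok: "okm (Min (dom p)) (Max (dom p)) P" "okm (Min (dom p)) (Max (dom p)) Q"
    and le: "p \<subseteq>\<^sub>m P" "q \<subseteq>\<^sub>m Q" and r: "reduced w" "w \<noteq> []" "fst (hd w) = Gt"
    and d: "\<forall>c\<in>Ess p \<union> Ess q. wev P Q w c \<noteq> None"
    and iv: "Ess p \<union> Ess q \<noteq> {} \<longrightarrow> (\<forall>x\<in>Ess P. the (wev P Q w (Min (Ess p \<union> Ess q))) > x)"
    and v: "\<forall>c\<in>Ess p \<union> Ess q. aJ < the (wev P Q w c) \<and> the (wev P Q w c) < Max (dom p)"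
       "pm (snd (hd w)) Q aJ (Max (dom p))"
  shows "liberates_p_el p q P Q w"
proof -
  have "pisom P" "pisom Q" using ok unfolding okm_def by auto
  moreover have "informative P" "informative Q" using okm_informative ok by auto
  moreover have "Min (dom P) = Min (dom p)" "Max (dom P) = Max (dom p)" using okm_Min okm_Max ok by auto
  moreover have "Min (dom Q) = Min (dom q)" "Max (dom Q) = Max (dom q)" using okm_Min okm_Max ok mm by auto
  moreover have "if snd (hd w) then p_increasing Q aJ (Max (dom q)) else p_decreasing Q aJ (Max (dom q))"
    using v(2) unfolding pm_def mm(2)[symmetric] by simp
  ultimately show ?thesis unfolding liberates_p_el_def using le r d iv v(1) mm by auto
qed

lemma red_hd:
  assumes "reduced (l # v)" "v \<noteq> []" shows "\<not> (fst l = fst (hd v) \<and> snd l \<noteq> snd (hd v))"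
  using assms unfolding reduced_def by (auto simp: hd_conv_nth)

lemma red_tl: "reduced (l # v) \<Longrightarrow> reduced v"
  unfolding reduced_def by (metis Suc_less_eq length_Cons nth_Cons_Suc)

lemma jstep:
  assumes ok: "okm a b Q" and pmJ: "pm \<sigma> Q aJ b" and x: "aJ < x" "x < b"
    and xin: "if \<sigma> then x \<in> dom Q else x \<in> ran Q"
  shows "\<exists>y. letter_act P Q (Gt,\<sigma>) x = Some y \<and> aJ < y \<and> y < b \<and> x < y"
proof -
  have pi: "pisom Q" using ok unfolding okm_def by auto
  have bas: "aJ < b" "Q aJ = Some aJ" "Q b = Some b" using pm_basic[OF pmJ] by auto
  show ?thesis
  proof (cases \<sigma>)
    case True
    then obtain y where y: "Q x = Some y" using xin by auto
    have "aJ < y" "y < b" using pisom_less[OF pi bas(2) y] pisom_less[OF pi y bas(3)] x by auto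
    moreover have "x < y" using pm_sign[OF pmJ _ x] y True by auto
    ultimately show ?thesis using True y by (auto simp: letter_act_sel)
  next
    case False
    then obtain y where y: "Q y = Some x" using xin by (auto simp: ran_def)
    have "aJ < y" "y < b" using pisom_less_iff[OF pi bas(2) y] pisom_less_iff[OF pi y bas(3)] x by auto
    moreover have "x < y" using pm_sign[OF pmJ _ \<open>aJ < y\<close> \<open>y < b\<close>] y False by auto
    ultimately show ?thesis using False y pinv_Some[OF pi] by (auto simp: letter_act_sel)
  qed
qed

lemma tr:
  assumes pi: "pisom P" "pisom Q" "pisom P'" "pisom Q'" and le: "P \<subseteq>\<^sub>m P'" "Q \<subseteq>\<^sub>m Q'"
    and d: "\<forall>c\<in>E. wev P Q v c \<noteq> None"
    and la: "\<forall>x\<in>(\<lambda>c. the (wev P Q v c)) ` E. letter_act P' Q' l x = Some (h x)"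
  shows "\<forall>c\<in>E. wev P' Q' (l # v) c = Some (h (the (wev P Q v c)))"
proof
  fix c assume c: "c \<in> E"
  obtain x where x: "wev P Q v c = Some x" using d c by auto
  have "wev P' Q' v c = Some x" using wev_mono[OF pi le x] .
  moreover have "letter_act P' Q' l x = Some (h x)" using la c x by force
  ultimately show "wev P' Q' (l # v) c = Some (h (the (wev P Q v c)))" using x by simp
qed

lemma image_tr:
  assumes "\<forall>c\<in>E. wev P' Q' (l # v) c = Some (h (the (wev P Q v c)))"
  shows "(\<lambda>c. the (wev P' Q' (l # v) c)) ` E = h ` ((\<lambda>c. the (wev P Q v c)) ` E)"
  using assms by (auto simp: image_iff)

lemma EL_main:
  assumes lib: "liberates_p_el p q p' q' w"
    and mm: "Min (dom p) = Min (dom q)" "Max (dom p) = Max (dom q)"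
    and red: "reduced (u @ w)" and hu: "u = [] \<or> fst (hd u) = Gt"
  shows "\<exists>p'' q''. p' \<subseteq>\<^sub>m p'' \<and> q' \<subseteq>\<^sub>m q'' \<and> liberates_p_el p q p'' q'' (u @ w)"
proof -
  define a where "a = Min (dom p)"
  define b where "b = Max (dom p)"
  define E where "E = Ess p \<union> Ess q"
  define \<sigma>0 where "\<sigma>0 = snd (hd w)"
  note U = lib_unpack[OF lib mm, folded a_def b_def E_def]
  have okp': "okm a b p'" and okq': "okm a b q'" using U by auto
  have w0: "w \<noteq> []" "hd w = (Gt, \<sigma>0)" using U(6,7) \<sigma>0_def by (cases "hd w"; auto)+
  have finE: "finite E"
  proof -
    have "Ess p \<subseteq> pts p'" "Ess q \<subseteq> pts q'"
      using map_le_implies_dom_le[OF U(3)] map_le_implies_ran_le[OF U(3)]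
        map_le_implies_dom_le[OF U(4)] map_le_implies_ran_le[OF U(4)]
      unfolding Ess_def pts_def by auto
    then show ?thesis unfolding E_def using okm_pts_finite[OF okp'] okm_pts_finite[OF okq']
      by (meson finite_Un finite_subset)
  qed
  define JS where "JS P Q v \<longleftrightarrow> set v \<subseteq> {(Gt,\<sigma>0)} \<and> liberates_p_el p q P Q (v @ w) \<and> p' \<subseteq>\<^sub>m P \<and> q' \<subseteq>\<^sub>m Q"
    for P Q v
  define FS where "FS P Q v \<longleftrightarrow> v \<noteq> [] \<and> p' \<subseteq>\<^sub>m P \<and> q' \<subseteq>\<^sub>m Q \<and> (\<forall>c\<in>E. wev P Q (v @ w) c \<noteq> None) \<and>
      FC a b P Q ((\<lambda>c. the (wev P Q (v @ w) c)) ` E) (fst (hd v)) (snd (hd v))" for P Q v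
  have mkFS: "FS P' Q' (l # v)"
    if okPQ: "okm a b P" "okm a b Q" and le0: "p' \<subseteq>\<^sub>m P" "q' \<subseteq>\<^sub>m Q"
      and d: "\<forall>c\<in>E. wev P Q (v @ w) c \<noteq> None"
      and res: "P \<subseteq>\<^sub>m P'" "Q \<subseteq>\<^sub>m Q'" "FC a b P' Q' (h ` ((\<lambda>c. the (wev P Q (v @ w) c)) ` E)) (fst l) (snd l)"
        "\<forall>x\<in>(\<lambda>c. the (wev P Q (v @ w) c)) ` E. letter_act P' Q' l x = Some (h x)"
    for P Q P' Q' v l h
  proof -
    have ok': "okm a b P'" "okm a b Q'" using res(3) unfolding FC_def by auto
    have pi: "pisom P" "pisom Q" "pisom P'" "pisom Q'" using okPQ ok' unfolding okm_def by auto
    have t: "\<forall>c\<in>E. wev P' Q' (l # v @ w) c = Some (h (the (wev P Q (v @ w) c)))"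
      using tr[OF pi res(1,2) d res(4)] .
    have im: "(\<lambda>c. the (wev P' Q' ((l # v) @ w) c)) ` E = h ` ((\<lambda>c. the (wev P Q (v @ w) c)) ` E)"
      using image_tr[OF t] by simp
    show ?thesis unfolding FS_def using t im res(3) map_le_trans[OF le0(1) res(1)] map_le_trans[OF le0(2) res(2)]
      by auto
  qed
  have stepF: "\<exists>P' Q'. FS P' Q' (l # v)" if F: "FS P Q v" and r: "reduced (l # v @ w)" for P Q v l
  proof -
    obtain g \<sigma> where gs: "hd v = (g, \<sigma>)" by (cases "hd v")
    obtain g' \<sigma>' where l: "l = (g', \<sigma>')" by (cases l)
    let ?X = "(\<lambda>c. the (wev P Q (v @ w) c)) ` E"
    have F': "v \<noteq> []" "p' \<subseteq>\<^sub>m P" "q' \<subseteq>\<^sub>m Q" "\<forall>c\<in>E. wev P Q (v @ w) c \<noteq> None"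
      "FC a b P Q ?X g \<sigma>" using F gs unfolding FS_def by auto
    have okPQ: "okm a b P" "okm a b Q" using F'(5) unfolding FC_def by auto
    have "hd (v @ w) = (g, \<sigma>)" using F'(1) gs by simp
    then have nr: "\<not> (g' = g \<and> \<sigma>' \<noteq> \<sigma>)" using red_hd[OF r] F'(1) l by auto
    show ?thesis
    proof (cases "g' = g")
      case True
      then have l2: "l = (g, \<sigma>)" using nr l by auto
      obtain P' Q' h where R: "P \<subseteq>\<^sub>m P'" "Q \<subseteq>\<^sub>m Q'" "FC a b P' Q' (h ` ?X) g \<sigma>"
         "\<forall>x\<in>?X. letter_act P' Q' (g,\<sigma>) x = Some (h x)"
        using SG[OF F'(5)] by blast
      have "FS P' Q' ((g,\<sigma>) # v)" using mkFS[OF okPQ F'(2,3,4) R(1,2), where l = "(g,\<sigma>)" and h = h] R(3,4) by simp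
      then show ?thesis using l2 by blast
    next
      case False
      then have g': "g' = oth g" by (cases g; cases g') auto
      have finX: "finite ?X" and Xab: "?X \<subseteq> {a<..<b}" using F'(5) finE unfolding FC_def by auto
      have below: "\<forall>y\<in>pts (selm g' P Q). a < y \<longrightarrow> y < b \<longrightarrow> (\<forall>x\<in>?X. y < x)"
      proof (intro ballI impI)
        fix y x assume y: "y \<in> pts (selm g' P Q)" "a < y" "y < b" and x: "x \<in> ?X"
        have "y \<notin> ?X" using F'(5) y(1) g' unfolding FC_def by auto
        moreover have "y \<in> pts P \<union> pts Q" using y(1) pts_sel[of P Q g'] by auto
        ultimately show "y < x" using F'(5) y x unfolding FC_def by auto
      qed
      obtain P' Q' h where R: "P \<subseteq>\<^sub>m P'" "Q \<subseteq>\<^sub>m Q'" "FC a b P' Q' (h ` ?X) g' \<sigma>'"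
         "\<forall>x\<in>?X. letter_act P' Q' (g',\<sigma>') x = Some (h x)"
        using GC[OF okPQ finX Xab below, of \<sigma>'] by blast
      have "FS P' Q' ((g',\<sigma>') # v)" using mkFS[OF okPQ F'(2,3,4) R(1,2), where l = "(g',\<sigma>')" and h = h] R(3,4) by simp
      then show ?thesis using l by blast
    qed
  qed
  have stepJ: "\<exists>P' Q'. JS P' Q' (l # v) \<or> FS P' Q' (l # v)" if J: "JS P Q v" and r: "reduced (l # v @ w)"
    for P Q v l
  proof -
    obtain g' \<sigma>' where l: "l = (g', \<sigma>')" by (cases l)
    let ?X = "(\<lambda>c. the (wev P Q (v @ w) c)) ` E"
    have L: "liberates_p_el p q P Q (v @ w)" and sv: "set v \<subseteq> {(Gt,\<sigma>0)}"
      and le0: "p' \<subseteq>\<^sub>m P" "q' \<subseteq>\<^sub>m Q" using J unfolding JS_def by auto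
    note V = lib_unpack[OF L mm, folded a_def b_def E_def]
    have hdv: "hd (v @ w) = (Gt, \<sigma>0)"
    proof (cases v)
      case Nil then show ?thesis using w0 by simp
    next
      case (Cons x xs) then show ?thesis using sv by simp
    qed
    have nr: "\<not> (g' = Gt \<and> \<sigma>' \<noteq> \<sigma>0)" using red_hd[OF r] hdv l w0(1) by auto
    obtain aJ where aJ: "\<forall>c\<in>E. aJ < the (wev P Q (v @ w) c) \<and> the (wev P Q (v @ w) c) < b"
      "pm \<sigma>0 Q aJ b" using V(10) hdv by auto
    have okPQ: "okm a b P" "okm a b Q" using V by auto
    have pi: "pisom P" "pisom Q" using okPQ unfolding okm_def by auto
    have aJa: "a \<le> aJ" using pm_dom_le[OF aJ(2) okPQ(2)] .
    have finX: "finite ?X" using finE by auto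
    have XJ: "?X \<subseteq> {aJ<..<b}" using aJ(1) by auto
    show ?thesis
    proof (cases "g' = Gt")
      case True
      then have l2: "l = (Gt, \<sigma>0)" using nr l by auto
      obtain Q' where Q': "okm a b Q'" "pm \<sigma>0 Q' aJ b" "Q \<subseteq>\<^sub>m Q'"
        "\<forall>x\<in>?X. if \<sigma>0 then x \<in> dom Q' else x \<in> ran Q'"
        using nbr_set[OF okPQ(2) aJ(2) finX XJ] by blast
      have piQ': "pisom Q'" using Q'(1) unfolding okm_def by auto
      have new: "\<exists>y. wev P Q' (l # v @ w) c = Some y \<and> aJ < y \<and> y < b \<and> the (wev P Q (v @ w) c) < y"
        if c: "c \<in> E" for c
      proof -
        obtain x where x: "wev P Q (v @ w) c = Some x" using V(8) c by auto
        have x': "wev P Q' (v @ w) c = Some x" using wev_mono[OF pi pi(1) piQ' map_le_refl Q'(3) x] .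
        have xJ: "aJ < x" "x < b" using aJ(1) c x by force+
        have xX: "x \<in> ?X" using c x by force
        have "if \<sigma>0 then x \<in> dom Q' else x \<in> ran Q'" using Q'(4) xX by blast
        then obtain y where y: "letter_act P Q' (Gt,\<sigma>0) x = Some y" "aJ < y" "y < b" "x < y"
          using jstep[OF Q'(1,2) xJ, where P = P] by blast
        show ?thesis using x x' y l2 by auto
      qed
      have "liberates_p_el p q P Q' ((l # v) @ w)"
      proof (rule lib_pack[OF mm, where aJ = aJ])
        show "okm (Min (dom p)) (Max (dom p)) P" "okm (Min (dom p)) (Max (dom p)) Q'"
          using okPQ Q'(1) a_def b_def by auto
        show "p \<subseteq>\<^sub>m P" using V(3) .
        show "q \<subseteq>\<^sub>m Q'" using map_le_trans[OF V(4) Q'(3)] .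
        show "reduced ((l # v) @ w)" using r by simp
        show "(l # v) @ w \<noteq> []" by simp
        show "fst (hd ((l # v) @ w)) = Gt" using l2 by simp
        show "\<forall>c\<in>Ess p \<union> Ess q. wev P Q' ((l # v) @ w) c \<noteq> None" using new unfolding E_def by fastforce
        show "Ess p \<union> Ess q \<noteq> {} \<longrightarrow> (\<forall>x\<in>Ess P. x < the (wev P Q' ((l # v) @ w) (Min (Ess p \<union> Ess q))))"
        proof (intro impI ballI)
          assume ne: "Ess p \<union> Ess q \<noteq> {}" fix z assume z: "z \<in> Ess P"
          have mE: "Min E \<in> E" using Min_in[OF finE] ne unfolding E_def by auto
          obtain y where y: "wev P Q' (l # v @ w) (Min E) = Some y" "the (wev P Q (v @ w) (Min E)) < y"
            using new[OF mE] by blast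
          have "z < the (wev P Q (v @ w) (Min E))" using V(9) ne z unfolding E_def by auto
          then show "z < the (wev P Q' ((l # v) @ w) (Min (Ess p \<union> Ess q)))" using y unfolding E_def by auto
        qed
        show "\<forall>c\<in>Ess p \<union> Ess q. aJ < the (wev P Q' ((l # v) @ w) c) \<and> the (wev P Q' ((l # v) @ w) c) < Max (dom p)"
          using new unfolding E_def b_def by fastforce
        show "pm (snd (hd ((l # v) @ w))) Q' aJ (Max (dom p))" using Q'(2) l2 b_def by simp
      qed
      moreover have "set (l # v) \<subseteq> {(Gt,\<sigma>0)}" using sv l2 by auto
      ultimately have "JS P Q' (l # v)" unfolding JS_def using le0 map_le_trans[OF le0(2) Q'(3)] by auto
      then show ?thesis by blast
    next
      case False
      then have g': "g' = Gs" by (cases g') auto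
      have Xab: "?X \<subseteq> {a<..<b}" using XJ aJa by auto
      have below: "\<forall>y\<in>pts (selm g' P Q). a < y \<longrightarrow> y < b \<longrightarrow> (\<forall>x\<in>?X. y < x)"
      proof (intro ballI impI)
        fix y x assume y: "y \<in> pts (selm g' P Q)" "a < y" "y < b" and x: "x \<in> ?X"
        obtain c where c: "c \<in> E" "x = the (wev P Q (v @ w) c)" using x by auto
        have ne: "E \<noteq> {}" using c by auto
        have mE: "Min E \<in> E" "Min E \<le> c" using Min_in[OF finE ne] Min_le[OF finE c(1)] by auto
        have yE: "y \<in> Ess P" using okm_Ess[OF okPQ(1)] y g' by auto
        have "y < the (wev P Q (v @ w) (Min E))" using V(9) ne yE unfolding E_def by auto
        moreover obtain x0 where "wev P Q (v @ w) (Min E) = Some x0" using V(8) mE unfolding E_def by auto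
        moreover obtain x1 where "wev P Q (v @ w) c = Some x1" using V(8) c unfolding E_def by auto
        ultimately show "y < x" using wev_le[OF pi, of "v @ w" "Min E" _ c] mE(2) c(2) by force
      qed
      obtain P' Q' h where R: "P \<subseteq>\<^sub>m P'" "Q \<subseteq>\<^sub>m Q'" "FC a b P' Q' (h ` ?X) g' \<sigma>'"
         "\<forall>x\<in>?X. letter_act P' Q' (g',\<sigma>') x = Some (h x)"
        using GC[OF okPQ finX Xab below, of \<sigma>'] by blast
      have d: "\<forall>c\<in>E. wev P Q (v @ w) c \<noteq> None" using V(8) unfolding E_def .
      have "FS P' Q' ((g',\<sigma>') # v)" using mkFS[OF okPQ le0 d R(1,2), where l = "(g',\<sigma>')" and h = h] R(3,4) by simp
      then have "FS P' Q' (l # v)" using l by simp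
      then show ?thesis by blast
    qed
  qed
  have main: "reduced (v @ w) \<Longrightarrow> \<exists>P Q. JS P Q v \<or> FS P Q v" for v
  proof (induction v)
    case Nil
    have "JS p' q' []" unfolding JS_def using lib by auto
    then show ?case by blast
  next
    case (Cons l v)
    have r: "reduced (l # v @ w)" using Cons.prems by simp
    then obtain P Q where "JS P Q v \<or> FS P Q v" using Cons.IH red_tl by auto
    then show ?case using stepJ[OF _ r] stepF[OF _ r] by blast
  qed
  obtain P Q where PQ: "JS P Q u \<or> FS P Q u" using main[OF red] by blast
  then show ?thesis
  proof
    assume "JS P Q u" then show ?thesis unfolding JS_def by blast
  next
    assume F: "FS P Q u"
    let ?X = "(\<lambda>c. the (wev P Q (u @ w) c)) ` E"
    have F': "u \<noteq> []" "p' \<subseteq>\<^sub>m P" "q' \<subseteq>\<^sub>m Q" "\<forall>c\<in>E. wev P Q (u @ w) c \<noteq> None"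
      "FC a b P Q ?X (fst (hd u)) (snd (hd u))" using F unfolding FS_def by auto
    have gu: "fst (hd u) = Gt" using hu F'(1) by auto
    have FC': "FC a b P Q ?X Gt (snd (hd u))" using F'(5) gu by simp
    have okPQ: "okm a b P" "okm a b Q" using FC' unfolding FC_def by auto
    have XP: "?X \<inter> pts P = {}" using FC' unfolding FC_def by simp
    have bel: "\<forall>y\<in>pts P \<union> pts Q. a < y \<longrightarrow> y < b \<longrightarrow> y \<notin> ?X \<longrightarrow> (\<forall>x\<in>?X. y < x)"
      using FC' unfolding FC_def by blast
    obtain f where f: "pm (snd (hd u)) Q f b" "\<forall>x\<in>?X. f < x" using FC' unfolding FC_def by auto
    have Xab: "?X \<subseteq> {a<..<b}" using FC' unfolding FC_def by blast
    have "liberates_p_el p q P Q (u @ w)"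
    proof (rule lib_pack[OF mm, where aJ = f])
      show "okm (Min (dom p)) (Max (dom p)) P" "okm (Min (dom p)) (Max (dom p)) Q"
        using okPQ a_def b_def by auto
      show "p \<subseteq>\<^sub>m P" using map_le_trans[OF U(3) F'(2)] .
      show "q \<subseteq>\<^sub>m Q" using map_le_trans[OF U(4) F'(3)] .
      show "reduced (u @ w)" using red .
      show "u @ w \<noteq> []" using F'(1) by simp
      show "fst (hd (u @ w)) = Gt" using gu F'(1) by simp
      show "\<forall>c\<in>Ess p \<union> Ess q. wev P Q (u @ w) c \<noteq> None" using F'(4) unfolding E_def .
      show "Ess p \<union> Ess q \<noteq> {} \<longrightarrow> (\<forall>x\<in>Ess P. x < the (wev P Q (u @ w) (Min (Ess p \<union> Ess q))))"
      proof (intro impI ballI)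
        assume ne: "Ess p \<union> Ess q \<noteq> {}" fix z assume z: "z \<in> Ess P"
        have mE: "Min E \<in> E" using Min_in[OF finE] ne unfolding E_def by auto
        have xin: "the (wev P Q (u @ w) (Min E)) \<in> ?X" using mE by blast
        have zP: "z \<in> pts P" "a < z" "z < b" using z okm_Ess[OF okPQ(1)] by auto
        have "z \<notin> ?X" using XP zP(1) by blast
        then show "z < the (wev P Q (u @ w) (Min (Ess p \<union> Ess q)))"
          using bel zP xin unfolding E_def by blast
      qed
      show "\<forall>c\<in>Ess p \<union> Ess q. f < the (wev P Q (u @ w) c) \<and> the (wev P Q (u @ w) c) < Max (dom p)"
        using f(2) Xab unfolding E_def b_def by fastforce
      show "pm (snd (hd (u @ w))) Q f (Max (dom p))" using f(1) F'(1) b_def by simp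
    qed
    then show ?thesis using F'(2,3) by blast
  qed
qed


definition consec :: "rat set \<Rightarrow> rat \<Rightarrow> rat \<Rightarrow> bool" where
  "consec F a b \<longleftrightarrow> a \<in> F \<and> b \<in> F \<and> a < b \<and> (\<forall>c\<in>F. \<not> (a < c \<and> c < b))"

lemma consec_inter:
  assumes "consec F a b" "consec F c d" "(a,b) \<noteq> (c,d)" "x \<in> {a..b}" "x \<in> {c..d}"
  shows "x = a \<or> x = b"
proof -
  have A: "a \<in> F" "b \<in> F" "a < b" "\<forall>e\<in>F. \<not> (a < e \<and> e < b)" using assms(1) unfolding consec_def by auto
  have C: "c \<in> F" "d \<in> F" "c < d" "\<forall>e\<in>F. \<not> (c < e \<and> e < d)" using assms(2) unfolding consec_def by auto
  consider "a < c" | "c < a" | "a = c" by fastforce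
  then show ?thesis
  proof cases
    case 1
    then have "b \<le> c" using A(4) C(1) by fastforce
    then show ?thesis using assms(4,5) by auto
  next
    case 2
    then have "d \<le> a" using C(4) A(1) by fastforce
    then show ?thesis using assms(4,5) by auto
  next
    case 3
    have "\<not> b < d" using A(2) C(4) 3 A(3) by auto
    moreover have "\<not> d < b" using C(2) A(4) 3 C(3) by auto
    ultimately have "b = d" by auto
    then show ?thesis using 3 assms(3) by auto
  qed
qed

lemma restrict_Min_Max:
  assumes "finite (dom p)" "a \<in> dom p" "b \<in> dom p" "a \<le> b"
  shows "Min (dom (p |` {a..b})) = a" "Max (dom (p |` {a..b})) = b"
proof -
  have d: "dom (p |` {a..b}) = dom p \<inter> {a..b}" by auto
  have f: "finite (dom p \<inter> {a..b})" using assms by auto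
  show "Min (dom (p |` {a..b})) = a" unfolding d by (rule Min_eqI) (use f assms in auto)
  show "Max (dom (p |` {a..b})) = b" unfolding d by (rule Max_eqI) (use f assms in auto)
qed

definition pst :: "rat \<Rightarrow> rat \<Rightarrow> (rat \<rightharpoonup> rat) \<Rightarrow> (rat \<rightharpoonup> rat) \<Rightarrow> (rat \<rightharpoonup> rat)" where
  "pst a b M P = (\<lambda>x. if x \<in> {a..b} then M x else P x)"

lemma pst_restrict_self:
  assumes "dom M \<subseteq> {a..b}" shows "pst a b M P |` {a..b} = M"
proof
  fix x show "(pst a b M P |` {a..b}) x = M x"
  proof (cases "x \<in> {a..b}")
    case True then show ?thesis unfolding pst_def by simp
  next
    case False
    then have "x \<notin> dom M" using assms by auto
    then show ?thesis using False by (simp add: domIff)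
  qed
qed

lemma pst_restrict_other:
  assumes "\<forall>x\<in>{a..b} \<inter> {c..d}. M x = P x"
  shows "pst a b M P |` {c..d} = P |` {c..d}"
  unfolding pst_def restrict_map_def using assms by (intro ext) auto

lemma pst_pisom:
  assumes pP: "pisom P" and oM: "okm a b M" and Pa: "P a = Some a" and Pb: "P b = Some b"
  shows "pisom (pst a b M P)"
  unfolding pisom_def
proof (intro conjI ballI impI)
  have "dom (pst a b M P) \<subseteq> dom M \<union> dom P" unfolding pst_def by (auto split: if_splits)
  then show "finite (dom (pst a b M P))"
    using okm_dom_finite[OF oM] pP unfolding pisom_def by (meson finite_Un finite_subset)
next
  fix x y assume x: "x \<in> dom (pst a b M P)" and y: "y \<in> dom (pst a b M P)" and xy: "x < y"
  have pM: "pisom M" using oM unfolding okm_def by auto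
  show "the (pst a b M P x) < the (pst a b M P y)"
  proof (cases "x \<in> {a..b}"; cases "y \<in> {a..b}")
    assume xi: "x \<in> {a..b}" and yi: "y \<in> {a..b}"
    obtain u where u: "M x = Some u" using x xi unfolding pst_def by auto
    obtain v where v: "M y = Some v" using y yi unfolding pst_def by auto
    show ?thesis using pisom_less[OF pM u v xy] xi yi u v unfolding pst_def by auto
  next
    assume xi: "x \<in> {a..b}" and yi: "y \<notin> {a..b}"
    then have yb: "b < y" using xy by auto
    obtain u where u: "M x = Some u" using x xi unfolding pst_def by auto
    obtain v where v: "P y = Some v" using y yi unfolding pst_def by auto
    have "u \<le> b" using okm_ran[OF oM u] by auto
    moreover have "b < v" using pisom_less[OF pP Pb v yb] .
    ultimately show ?thesis using xi yi u v unfolding pst_def by auto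
  next
    assume xi: "x \<notin> {a..b}" and yi: "y \<in> {a..b}"
    then have xa: "x < a" using xy by auto
    obtain u where u: "P x = Some u" using x xi unfolding pst_def by auto
    obtain v where v: "M y = Some v" using y yi unfolding pst_def by auto
    have "a \<le> v" using okm_ran[OF oM v] by auto
    moreover have "u < a" using pisom_less[OF pP u Pa xa] .
    ultimately show ?thesis using xi yi u v unfolding pst_def by auto
  next
    assume xi: "x \<notin> {a..b}" and yi: "y \<notin> {a..b}"
    obtain u where u: "P x = Some u" using x xi unfolding pst_def by auto
    obtain v where v: "P y = Some v" using y yi unfolding pst_def by auto
    show ?thesis using pisom_less[OF pP u v xy] xi yi u v unfolding pst_def by auto
  qed
qed

lemma pst_le:
  assumes "P |` {a..b} \<subseteq>\<^sub>m M" shows "P \<subseteq>\<^sub>m pst a b M P"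
  unfolding map_le_def pst_def
proof (intro ballI)
  fix x assume x: "x \<in> dom P"
  show "P x = (if x \<in> {a..b} then M x else P x)"
  proof (cases "x \<in> {a..b}")
    case True
    then have "(P |` {a..b}) x = P x" by simp
    then show ?thesis using True map_le_Some[OF assms] x by auto
  qed auto
qed

lemma Min_box: "finite A \<Longrightarrow> A \<subseteq> {m..M} \<Longrightarrow> m \<in> A \<Longrightarrow> Min A = (m::rat)"
  by (rule Min_eqI) auto
lemma Max_box: "finite A \<Longrightarrow> A \<subseteq> {m..M} \<Longrightarrow> M \<in> A \<Longrightarrow> Max A = (M::rat)"
  by (rule Max_eqI) auto

lemma glue_main:
  assumes pe: "piecewise_elementary p q" and lib: "liberates_p p q p' q' w"
    and red: "reduced (u @ w)" and hu: "u = [] \<or> fst (hd u) = Gt"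
  shows "\<exists>p'' q''. p' \<subseteq>\<^sub>m p'' \<and> q' \<subseteq>\<^sub>m q'' \<and> pisom p'' \<and> pisom q'' \<and> liberates_p p q p'' q'' (u @ w)"
proof -
  define F where "F = Fixp p \<inter> Fixp q"
  define C where "C = {(a,b). consec F a b}"
  have L: "pisom p'" "pisom q'" "p \<subseteq>\<^sub>m p'" "q \<subseteq>\<^sub>m q'" "reduced w"
    "Min (dom p') = Min (dom p)" "Min (dom q') = Min (dom q)" "Max (dom p') = Max (dom p)" "Max (dom q') = Max (dom q)"
    using lib unfolding liberates_p_def by auto
  have Lel: "\<And>a b. consec F a b \<Longrightarrow>
      liberates_p_el (p |` {a..b}) (q |` {a..b}) (p' |` {a..b}) (q' |` {a..b}) w"
    using lib unfolding liberates_p_def consec_def F_def by blast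
  have P: "informative p" "informative q" "Min (dom p) = Min (dom q)" "Max (dom p) = Max (dom q)"
    using pe unfolding piecewise_elementary_def by auto
  define m0 where "m0 = Min (dom p)"
  define M0 where "M0 = Max (dom p)"
  have fp': "finite (dom p')" "finite (dom q')" using L(1,2) unfolding pisom_def by auto
  have fp: "finite (dom p)" "finite (dom q)" using fp' map_le_implies_dom_le[OF L(3)] map_le_implies_dom_le[OF L(4)]
    by (auto intro: finite_subset)
  have nep: "dom p \<noteq> {}" "dom q \<noteq> {}" using P(1,2) unfolding informative_def by auto
  have m0d: "m0 \<in> dom p" "M0 \<in> dom p" using Min_in[OF fp(1) nep(1)] Max_in[OF fp(1) nep(1)] m0_def M0_def by auto
  have dp'box: "dom p' \<subseteq> {m0..M0}"
  proof
    fix x assume "x \<in> dom p'"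
    then show "x \<in> {m0..M0}" using Min_le[OF fp'(1)] Max_ge[OF fp'(1)] L(6,8) m0_def M0_def by fastforce
  qed
  have dq'box: "dom q' \<subseteq> {m0..M0}"
  proof
    fix x assume "x \<in> dom q'"
    then show "x \<in> {m0..M0}" using Min_le[OF fp'(2)] Max_ge[OF fp'(2)] L(7,9) P(3,4) m0_def M0_def by fastforce
  qed
  have dpbox: "dom p \<subseteq> {m0..M0}" using dp'box map_le_implies_dom_le[OF L(3)] by auto
  have FD: "\<And>a. a \<in> F \<Longrightarrow> p a = Some a \<and> q a = Some a" unfolding F_def Fixp_def by auto
  have finC: "finite C"
  proof -
    have "F \<subseteq> dom p" unfolding F_def Fixp_def by auto
    then have "finite F" using fp(1) by (rule finite_subset)
    moreover have "C \<subseteq> F \<times> F" unfolding C_def consec_def by auto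
    ultimately show ?thesis by (meson finite_SigmaI finite_subset)
  qed
  define Inv where "Inv S P Q \<longleftrightarrow> p' \<subseteq>\<^sub>m P \<and> q' \<subseteq>\<^sub>m Q \<and> pisom P \<and> pisom Q \<and>
     dom P \<subseteq> {m0..M0} \<and> dom Q \<subseteq> {m0..M0} \<and>
     (\<forall>(a,b)\<in>S. liberates_p_el (p |` {a..b}) (q |` {a..b}) (P |` {a..b}) (Q |` {a..b}) (u @ w)) \<and>
     (\<forall>(a,b)\<in>C - S. P |` {a..b} = p' |` {a..b} \<and> Q |` {a..b} = q' |` {a..b})" for S P Q
  have ind: "S \<subseteq> C \<Longrightarrow> \<exists>P Q. Inv S P Q" if fS: "finite S" for S
    using fS
  proof (induction S rule: finite_induct)
    case empty
    have "Inv {} p' q'" using L(1,2) dp'box dq'box unfolding Inv_def by auto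
    then show ?case by blast
  next
    case (insert ab S)
    obtain a b where ab: "ab = (a,b)" by (cases ab)
    obtain P Q where I: "Inv S P Q" using insert by auto
    have I': "p' \<subseteq>\<^sub>m P" "q' \<subseteq>\<^sub>m Q" "pisom P" "pisom Q" "dom P \<subseteq> {m0..M0}" "dom Q \<subseteq> {m0..M0}"
      "\<forall>(c,d)\<in>S. liberates_p_el (p |` {c..d}) (q |` {c..d}) (P |` {c..d}) (Q |` {c..d}) (u @ w)"
      "\<forall>(c,d)\<in>C - S. P |` {c..d} = p' |` {c..d} \<and> Q |` {c..d} = q' |` {c..d}"
      using I unfolding Inv_def by auto
    have cab: "consec F a b" using insert(4) ab unfolding C_def by auto
    have abC: "(a,b) \<in> C - S" using insert(2,4) ab by auto
    have rest: "P |` {a..b} = p' |` {a..b}" "Q |` {a..b} = q' |` {a..b}" using I'(8) abC by auto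
    have aF: "a \<in> F" "b \<in> F" "a < b" using cab unfolding consec_def by auto
    have pa: "p a = Some a" "p b = Some b" "q a = Some a" "q b = Some b" using FD aF by auto
    have dab: "a \<in> dom p" "b \<in> dom p" "a \<in> dom q" "b \<in> dom q" "a \<le> b" using pa aF by auto
    note r1 = restrict_Min_Max[OF fp(1) dab(1,2,5)] and r2 = restrict_Min_Max[OF fp(2) dab(3,4,5)]
    have mmI: "Min (dom (p |` {a..b})) = Min (dom (q |` {a..b}))" "Max (dom (p |` {a..b})) = Max (dom (q |` {a..b}))"
      using r1 r2 by auto
    have mI: "Min (dom (p |` {a..b})) = a" "Max (dom (p |` {a..b})) = b" using r1 by auto
    obtain PI QI where E: "p' |` {a..b} \<subseteq>\<^sub>m PI" "q' |` {a..b} \<subseteq>\<^sub>m QI"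
      "liberates_p_el (p |` {a..b}) (q |` {a..b}) PI QI (u @ w)"
      using EL_main[OF Lel[OF cab] mmI red hu] by blast
    have okI: "okm a b PI" "okm a b QI" using lib_unpack(1,2)[OF E(3) mmI] mI by auto
    have Pab: "P a = Some a" "P b = Some b" "Q a = Some a" "Q b = Some b"
      using pa map_le_Some[OF map_le_trans[OF L(3) I'(1)]] map_le_Some[OF map_le_trans[OF L(4) I'(2)]] by auto
    have okab: "PI a = Some a" "PI b = Some b" "QI a = Some a" "QI b = Some b" using okI unfolding okm_def by auto
    let ?P = "pst a b PI P" and ?Q = "pst a b QI Q"
    have pis: "pisom ?P" "pisom ?Q" using pst_pisom[OF I'(3) okI(1) Pab(1,2)] pst_pisom[OF I'(4) okI(2) Pab(3,4)] by auto
    have le: "P \<subseteq>\<^sub>m ?P" "Q \<subseteq>\<^sub>m ?Q" using pst_le E(1,2) rest by auto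
    have dI: "dom PI \<subseteq> {a..b}" "dom QI \<subseteq> {a..b}" using okI unfolding okm_def by auto
    have abbox: "{a..b} \<subseteq> {m0..M0}" using dpbox dab(1,2) by auto
    have "dom ?P \<subseteq> dom PI \<union> dom P" "dom ?Q \<subseteq> dom QI \<union> dom Q" unfolding pst_def by (auto split: if_splits)
    then have dbox: "dom ?P \<subseteq> {m0..M0}" "dom ?Q \<subseteq> {m0..M0}"
      using dI abbox I'(5,6) by blast+
    have self: "?P |` {a..b} = PI" "?Q |` {a..b} = QI" using pst_restrict_self dI by auto
    have other: "?P |` {c..d} = P |` {c..d} \<and> ?Q |` {c..d} = Q |` {c..d}" if cd: "(c,d) \<in> C" "(c,d) \<noteq> (a,b)" for c d
    proof -
      have ccd: "consec F c d" using cd(1) unfolding C_def by auto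
      have "\<forall>x\<in>{a..b} \<inter> {c..d}. PI x = P x \<and> QI x = Q x"
        using consec_inter[OF cab ccd] cd(2) okab Pab by (metis IntD1 IntD2 \<open>a < b\<close>)
      then show ?thesis using pst_restrict_other[of a b c d PI P] pst_restrict_other[of a b c d QI Q] by auto
    qed
    have "Inv (insert ab S) ?P ?Q" unfolding Inv_def
    proof (intro conjI)
      show "p' \<subseteq>\<^sub>m ?P" "q' \<subseteq>\<^sub>m ?Q" using map_le_trans I'(1,2) le by blast+
      show "pisom ?P" "pisom ?Q" using pis by auto
      show "dom ?P \<subseteq> {m0..M0}" "dom ?Q \<subseteq> {m0..M0}" using dbox by auto
      show "\<forall>(c,d)\<in>insert ab S. liberates_p_el (p |` {c..d}) (q |` {c..d}) (?P |` {c..d}) (?Q |` {c..d}) (u @ w)"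
      proof (intro ballI, clarify)
        fix c d assume cd: "(c,d) \<in> insert ab S"
        show "liberates_p_el (p |` {c..d}) (q |` {c..d}) (?P |` {c..d}) (?Q |` {c..d}) (u @ w)"
        proof (cases "(c,d) = (a,b)")
          case True then show ?thesis using E(3) self by auto
        next
          case False
          then have "(c,d) \<in> S" using cd ab by auto
          moreover have "(c,d) \<in> C" using calculation insert(4) by auto
          ultimately show ?thesis using other[of c d] False I'(7) by auto
        qed
      qed
      show "\<forall>(c,d)\<in>C - insert ab S. ?P |` {c..d} = p' |` {c..d} \<and> ?Q |` {c..d} = q' |` {c..d}"
      proof
        fix x assume x: "x \<in> C - insert ab S"
        obtain c d where xcd: "x = (c,d)" by (cases x)
        have cd: "(c,d) \<in> C" "(c,d) \<noteq> (a,b)" "(c,d) \<in> C - S" using x xcd ab by auto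
        have "?P |` {c..d} = p' |` {c..d} \<and> ?Q |` {c..d} = q' |` {c..d}"
          using other[OF cd(1,2)] I'(8) cd(3) by auto
        then show "case x of (c,d) \<Rightarrow> ?P |` {c..d} = p' |` {c..d} \<and> ?Q |` {c..d} = q' |` {c..d}"
          using xcd by simp
      qed
    qed
    then show ?case by blast
  qed
  obtain P Q where I: "Inv C P Q" using ind[OF finC] by blast
  have I': "p' \<subseteq>\<^sub>m P" "q' \<subseteq>\<^sub>m Q" "pisom P" "pisom Q" "dom P \<subseteq> {m0..M0}" "dom Q \<subseteq> {m0..M0}"
      "\<forall>(c,d)\<in>C. liberates_p_el (p |` {c..d}) (q |` {c..d}) (P |` {c..d}) (Q |` {c..d}) (u @ w)"
    using I unfolding Inv_def by auto
  have fPQ: "finite (dom P)" "finite (dom Q)" using I'(3,4) unfolding pisom_def by auto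
  have m0P: "m0 \<in> dom P" "M0 \<in> dom P" using m0d map_le_implies_dom_le[OF map_le_trans[OF L(3) I'(1)]] by auto
  have m0q: "m0 \<in> dom q" "M0 \<in> dom q" using Min_in[OF fp(2) nep(2)] Max_in[OF fp(2) nep(2)] P(3,4) m0_def M0_def
    by auto
  have m0Q: "m0 \<in> dom Q" "M0 \<in> dom Q" using m0q map_le_implies_dom_le[OF map_le_trans[OF L(4) I'(2)]] by auto
  have "liberates_p p q P Q (u @ w)" unfolding liberates_p_def
  proof (intro conjI)
    show "pisom P" "pisom Q" using I' by auto
    show "p \<subseteq>\<^sub>m P" "q \<subseteq>\<^sub>m Q" using map_le_trans L(3,4) I'(1,2) by blast+
    show "reduced (u @ w)" using red .
    show "Min (dom P) = Min (dom p)" using Min_box[OF fPQ(1) I'(5) m0P(1)] m0_def by simp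
    show "Max (dom P) = Max (dom p)" using Max_box[OF fPQ(1) I'(5) m0P(2)] M0_def by simp
    show "Min (dom Q) = Min (dom q)" using Min_box[OF fPQ(2) I'(6) m0Q(1)] m0_def P(3) by simp
    show "Max (dom Q) = Max (dom q)" using Max_box[OF fPQ(2) I'(6) m0Q(2)] M0_def P(4) by simp
    show "\<forall>a b. a \<in> Fixp p \<inter> Fixp q \<and> b \<in> Fixp p \<inter> Fixp q \<and> a < b \<and>
            (\<forall>c\<in>Fixp p \<inter> Fixp q. \<not> (a < c \<and> c < b)) \<longrightarrow>
        liberates_p_el (p |` {a..b}) (q |` {a..b}) (P |` {a..b}) (Q |` {a..b}) (u @ w)"
      using I'(7) unfolding C_def consec_def F_def by auto
  qed
  then show ?thesis using I' by blast
qed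


definition swl :: "gen \<times> bool \<Rightarrow> gen \<times> bool" where "swl l = (oth (fst l), snd l)"

lemma oth_inj: "oth x = oth y \<longleftrightarrow> x = y" by (cases x; cases y) auto
lemma oth_Gt: "oth g = Gt \<longleftrightarrow> g = Gs" by (cases g) auto

lemma letter_swl: "letter_act q p (swl l) = letter_act p q l"
proof -
  obtain g \<sigma> where l: "l = (g,\<sigma>)" by (cases l)
  show ?thesis unfolding l swl_def by (cases g; cases \<sigma>) auto
qed

lemma wev_sw: "wev q p (map swl v) c = wev p q v c"
  by (induction v) (auto simp: letter_swl)

lemma reduced_sw: "reduced (map swl v) \<longleftrightarrow> reduced v"
  unfolding reduced_def by (simp add: swl_def oth_inj)

lemma libq_el: "liberates_q_el p q P Q w \<longleftrightarrow> liberates_p_el q p Q P (map swl w)"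
proof (cases w)
  case Nil then show ?thesis unfolding liberates_q_el_def liberates_p_el_def by simp
next
  case (Cons l w')
  have h: "hd (map swl w) = swl l" "hd w = l" using Cons by auto
  show ?thesis unfolding liberates_q_el_def liberates_p_el_def
    by (simp only: h wev_sw reduced_sw Un_commute[of "Ess q" "Ess p"])
       (auto simp: swl_def oth_Gt map_le_def)
qed

lemma libq: "liberates_q p q P Q w \<longleftrightarrow> liberates_p q p Q P (map swl w)"
  unfolding liberates_q_def liberates_p_def libq_el reduced_sw
  by (simp only: Int_commute[of "Fixp q" "Fixp p"]) blast

theorem lemma3p10:
  fixes p q p' q' :: "rat \<rightharpoonup> rat" and u w :: word
  assumes "pisom p" and "pisom q" and "piecewise_elementary p q"
    and "reduced u" and "reduced (u @ w)"
  shows "(liberates_p p q p' q' w \<and> (u = [] \<or> fst (hd u) = Gt) \<longrightarrow>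
           (\<exists>p'' q''. p' \<subseteq>\<^sub>m p'' \<and> q' \<subseteq>\<^sub>m q'' \<and> pisom p'' \<and> pisom q'' \<and>
                      liberates_p p q p'' q'' (u @ w)))
       \<and> (liberates_q p q p' q' w \<and> (u = [] \<or> fst (hd u) = Gs) \<longrightarrow>
           (\<exists>p'' q''. p' \<subseteq>\<^sub>m p'' \<and> q' \<subseteq>\<^sub>m q'' \<and> pisom p'' \<and> pisom q'' \<and>
                      liberates_q p q p'' q'' (u @ w)))"
proof (intro conjI impI)
  assume h: "liberates_p p q p' q' w \<and> (u = [] \<or> fst (hd u) = Gt)"
  show "\<exists>p'' q''. p' \<subseteq>\<^sub>m p'' \<and> q' \<subseteq>\<^sub>m q'' \<and> pisom p'' \<and> pisom q'' \<and> liberates_p p q p'' q'' (u @ w)"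
    using glue_main[OF assms(3) _ assms(5)] h by blast
next
  assume h: "liberates_q p q p' q' w \<and> (u = [] \<or> fst (hd u) = Gs)"
  have pe: "piecewise_elementary q p" using assms(3) unfolding piecewise_elementary_def by auto
  have lib: "liberates_p q p q' p' (map swl w)" using h libq by auto
  have red: "reduced (map swl u @ map swl w)" using assms(5) reduced_sw[of "u @ w"] by simp
  have hu: "map swl u = [] \<or> fst (hd (map swl u)) = Gt"
    using h by (cases u) (auto simp: swl_def oth_Gt)
  obtain q'' p'' where r: "q' \<subseteq>\<^sub>m q''" "p' \<subseteq>\<^sub>m p''" "pisom q''" "pisom p''"
    "liberates_p q p q'' p'' (map swl u @ map swl w)"
    using glue_main[OF pe lib red hu] by blast
  have "liberates_q p q p'' q'' (u @ w)" using r(5) libq by simp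
  then show "\<exists>p'' q''. p' \<subseteq>\<^sub>m p'' \<and> q' \<subseteq>\<^sub>m q'' \<and> pisom p'' \<and> pisom q'' \<and> liberates_q p q p'' q'' (u @ w)"
    using r by blast
qed


end
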